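(* Let $0<a<b<1$ with $a+b=1$, $m\in C^1([0,1])$ non-constant, $c\in C([0,1])$, and assume (H1), (H2) and $m\in S_{\mathcal{D}}$. Then $\liminf_{s\to+\infty}\lambda(s)\ge\lambda^{\mathcal{D}}$.
   Context: Fix an integer $d\ge1$. $\lambda(s)$ denotes the principal eigenvalue of $-\varphi''-\frac{d-1}{r}\varphi'-2s\,m'(r)\varphi'+c(r)\varphi=\lambda\varphi$ on $(0,1)$, $\varphi'(0)=\varphi'(1)=0$; equivalently $\lambda(s)=\min\{\int_0^1 r^{d-1}e^{2sm}(|\varphi'|^2+c\varphi^2)dr:\ \varphi\in H^1((0,1)),\ \int_0^1 r^{d-1}e^{2sm}\varphi^2dr=1\}$. $\lambda^{\mathcal{D}}$ is the principal eigenvalue of $-\varphi''-\frac{d-1}{r}\varphi'+c\varphi=\lambda\varphi$ on $(a,b)$ with Dirichlet boundary conditions, i.e. the minimum of $\int_a^b r^{d-1}(|\varphi'|^2+c\varphi^2)dr$ over $\varphi\in H^1_0((a,b))$ with $\int_a^b r^{d-1}\varphi^2dr=1$. (H1): $m(r)=m(1-r)$ on $[0,1]$ and $m\equiv0$ on $[a,b]$, where $a+b=1$. (H2): $c>0$ on $[0,1]$ and $c(r)>\lambda^{\mathcal{D}}$ for $r\in[0,a]\cup[b,1]$. Step function $\tilde m$: given $\delta\in(0,a)$, constants $0<h<\alpha<\beta<1<\nu$ and $l\in\mathbb{N}$ with $\sum_{i\ge1}(\alpha^{i+l}+\beta^{i+l})=a-\delta$, put $x_0=\delta$, $x_n=\delta+\sum_{i=1}^n(\alpha^{i+l}+\beta^{i+l})$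 ($n\ge1$), $y_n=x_n+\alpha^{n+l+1}$ ($n\ge0$); define $\tilde m(r)=-h^n$ on $[x_n,y_n)$ and $\tilde m(r)=\nu h^n$ on $[y_n,x_{n+1})$ for $n\ge0$, and $\tilde m(r)=\tilde m(1-r)$ for $r\in[b,1-\delta]$. $S_{\mathcal{D}}$: the set of $m\in C^1([0,1])$ such that, for some such $\delta,h,\alpha,\beta,\nu,l$, $m'$ changes sign only finitely many times in $[0,\delta)\cup(1-\delta,1]$ and $m(r)\ge\tilde m(r)$ for all $r\in[\delta,a]\cup[b,1-\delta]$. *)

theory Defs
  imports "HOL-Analysis.Analysis"
begin

text \<open>One-dimensional Sobolev space H^1((p,q)), in its standard absolutely continuous
  representation: phi has a weak derivative g in L^2((p,q)), i.e.
  phi x = phi p + integral of g over [p,x].\<close>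
definition H1_on :: "real \<Rightarrow> real \<Rightarrow> (real \<Rightarrow> real) \<Rightarrow> (real \<Rightarrow> real) \<Rightarrow> bool" where
  "H1_on p q \<phi> g \<longleftrightarrow>
     set_borel_measurable lborel {p..q} g \<and>
     set_integrable lborel {p..q} (\<lambda>t. (g t)^2) \<and>
     (\<forall>x\<in>{p..q}. \<phi> x = \<phi> p + (LBINT t:{p..x}. g t))"

definition eig_s :: "nat \<Rightarrow> (real \<Rightarrow> real) \<Rightarrow> (real \<Rightarrow> real) \<Rightarrow> real \<Rightarrow> real" where
  "eig_s d m c s = Inf {(LBINT r:{0..1}. r^(d-1) * exp (2 * s * m r) * ((g r)^2 + c r * (\<phi> r)^2)) | \<phi> g.
       H1_on 0 1 \<phi> g \<and> (LBINT r:{0..1}. r^(d-1) * exp (2 * s * m r) * (\<phi> r)^2) = 1}"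

definition eig_D :: "nat \<Rightarrow> (real \<Rightarrow> real) \<Rightarrow> real \<Rightarrow> real \<Rightarrow> real" where
  "eig_D d c a b = Inf {(LBINT r:{a..b}. r^(d-1) * ((g r)^2 + c r * (\<phi> r)^2)) | \<phi> g.
       H1_on a b \<phi> g \<and> \<phi> a = 0 \<and> \<phi> b = 0 \<and> (LBINT r:{a..b}. r^(d-1) * (\<phi> r)^2) = 1}"

definition xs_pt :: "real \<Rightarrow> real \<Rightarrow> real \<Rightarrow> nat \<Rightarrow> nat \<Rightarrow> real" where
  "xs_pt \<delta> \<alpha> \<beta> l n = \<delta> + (\<Sum>i\<in>{1..n}. \<alpha>^(i+l) + \<beta>^(i+l))"

definition ys_pt :: "real \<Rightarrow> real \<Rightarrow> real \<Rightarrow> nat \<Rightarrow> nat \<Rightarrow> real" where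
  "ys_pt \<delta> \<alpha> \<beta> l n = xs_pt \<delta> \<alpha> \<beta> l n + \<alpha>^(n+l+1)"

text \<open>m \<ge> m-tilde on [delta,a) and on (b,1-delta] (where m-tilde(r) = m-tilde(1-r)).\<close>
definition above_step :: "(real \<Rightarrow> real) \<Rightarrow> real \<Rightarrow> real \<Rightarrow> real \<Rightarrow> real \<Rightarrow> real \<Rightarrow> nat \<Rightarrow> bool" where
  "above_step m \<delta> h \<alpha> \<beta> \<nu> l \<longleftrightarrow>
     (\<forall>n. \<forall>r\<in>{xs_pt \<delta> \<alpha> \<beta> l n..<ys_pt \<delta> \<alpha> \<beta> l n}.
          m r \<ge> - (h^n) \<and> m (1 - r) \<ge> - (h^n)) \<and>
     (\<forall>n. \<forall>r\<in>{ys_pt \<delta> \<alpha> \<beta> l n..<xs_pt \<delta> \<alpha> \<beta> l (Suc n)}.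
          m r \<ge> \<nu> * h^n \<and> m (1 - r) \<ge> \<nu> * h^n)"

text \<open>f changes sign only finitely many times on S: the number of strict sign
  alternations along increasing finite sequences of points of S is bounded.\<close>
definition finite_sign_changes :: "(real \<Rightarrow> real) \<Rightarrow> real set \<Rightarrow> bool" where
  "finite_sign_changes f S \<longleftrightarrow>
     (\<exists>N::nat. \<forall>ps::real list. sorted_wrt (<) ps \<and> set ps \<subseteq> S \<and>
        (\<forall>i. Suc i < length ps \<longrightarrow> f (ps!i) * f (ps!(Suc i)) < 0) \<longrightarrow> length ps \<le> N)"

definition in_SD :: "real \<Rightarrow> (real \<Rightarrow> real) \<Rightarrow> (real \<Rightarrow> real) \<Rightarrow> bool" where
  "in_SD a m m' \<longleftrightarrow>
     (\<exists>\<delta> h \<alpha> \<beta> \<nu> (l::nat). 0 < \<delta> \<and> \<delta> < a \<and> 0 < h \<and> h < \<alpha> \<and> \<alpha> < \<beta> \<and> \<beta> < 1 \<and> 1 < \<nu> \<and>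
        (\<lambda>i. \<alpha>^(Suc i + l) + \<beta>^(Suc i + l)) sums (a - \<delta>) \<and>
        finite_sign_changes m' ({0..<\<delta>} \<union> {1-\<delta><..1}) \<and>
        above_step m \<delta> h \<alpha> \<beta> \<nu> l)"

end

theory Submission
  imports Defs "HOL-Real_Asymp.Real_Asymp"
begin

lemma si_cont_mult:
  fixes S :: "real set" and h f :: "real \<Rightarrow> real"
  assumes "compact S" "continuous_on S h" "set_integrable lborel S f"
  shows "set_integrable lborel S (\<lambda>x. h x * f x)"
proof -
  obtain B where B: "\<forall>x\<in>S. norm (h x) \<le> B"
    using compact_imp_bounded[OF compact_continuous_image[OF assms(2,1)]]
    unfolding bounded_iff by auto
  have Sb: "S \<in> sets borel" using assms(1) by (simp add: compact_imp_closed)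
  have m1: "(\<lambda>x. indicator S x *\<^sub>R h x) \<in> borel_measurable lborel"
    using borel_measurable_continuous_on_indicator[OF Sb assms(2)] by simp
  have m2: "(\<lambda>x. indicator S x *\<^sub>R f x) \<in> borel_measurable lborel"
    using assms(3) unfolding set_integrable_def by (rule borel_measurable_integrable)
  have eq: "(\<lambda>x. indicator S x *\<^sub>R (h x * f x)) = (\<lambda>x. (indicator S x *\<^sub>R h x) * (indicator S x *\<^sub>R f x))"
    by (auto simp: indicator_def fun_eq_iff)
  show ?thesis unfolding set_integrable_def
  proof (rule Bochner_Integration.integrable_bound[where f="\<lambda>x. B * (indicator S x *\<^sub>R f x)"])
    show "integrable lborel (\<lambda>x. B * (indicator S x *\<^sub>R f x))"
      using assms(3) unfolding set_integrable_def by simp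
    show "(\<lambda>x. indicator S x *\<^sub>R (h x * f x)) \<in> borel_measurable lborel"
      unfolding eq using m1 m2 by measurable
    show "AE x in lborel. norm (indicator S x *\<^sub>R (h x * f x)) \<le> norm (B * (indicator S x *\<^sub>R f x))"
    proof (rule AE_I2)
      fix x show "norm (indicator S x *\<^sub>R (h x * f x)) \<le> norm (B * (indicator S x *\<^sub>R f x))"
      proof (cases "x \<in> S")
        case True
        then have "\<bar>h x\<bar> \<le> B" using B by auto
        then show ?thesis using True by (auto simp: abs_mult intro!: mult_right_mono)
      qed simp
    qed
  qed
qed

lemma set_int_mono_sets:
  fixes f :: "real \<Rightarrow> real"
  assumes "set_integrable lborel A f" "B \<in> sets lborel" "B \<subseteq> A" "\<forall>x\<in>A-B. 0 \<le> f x"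
  shows "(LBINT x:B. f x) \<le> (LBINT x:A. f x)"
proof -
  have iB: "set_integrable lborel B f" using set_integrable_subset[OF assms(1-3)] .
  show ?thesis using assms(1) iB assms(3,4) unfolding set_integrable_def set_lebesgue_integral_def
    by (intro integral_mono) (auto simp: indicator_def)
qed

lemma abs_le_sq: "\<bar>y::real\<bar> \<le> 1 + y^2"
proof -
  have "0 \<le> (\<bar>y\<bar> - 1/2)^2" by simp
  moreover have "\<bar>y\<bar>^2 = y^2" by simp
  ultimately show ?thesis unfolding power2_eq_square by (simp add: algebra_simps)
qed

lemma H1_g_int:
  assumes "H1_on p q \<phi> g"
  shows "set_integrable lborel {p..q} g"
proof (rule set_integrable_bound[where f="\<lambda>x. 1 + (g x)^2"])
  have "set_integrable lborel {p..q} (\<lambda>x. 1::real)"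
    by (rule borel_integrable_compact[unfolded set_integrable_def[symmetric]]) auto
  then show "set_integrable lborel {p..q} (\<lambda>x. 1 + (g x)^2)"
    using assms unfolding H1_on_def by (intro set_integral_add) auto
  show "set_borel_measurable lborel {p..q} g" using assms unfolding H1_on_def by auto
  show "AE x in lborel. x \<in> {p..q} \<longrightarrow> norm (g x) \<le> norm (1 + (g x)\<^sup>2)"
  proof (rule AE_I2, rule impI)
    fix x
    have "\<bar>g x\<bar> \<le> 1 + (g x)^2" by (rule abs_le_sq)
    then show "norm (g x) \<le> norm (1 + (g x)\<^sup>2)" by simp
  qed
qed

lemma H1_HK:
  assumes "H1_on p q \<phi> g" "x \<in> {p..q}"
  shows "\<phi> x = \<phi> p + integral {p..x} g"
proof -
  have "set_integrable lborel {p..x} g"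
    using set_integrable_subset[OF H1_g_int[OF assms(1)]] assms(2) by auto
  then have "(LBINT t:{p..x}. g t) = integral {p..x} g"
    by (rule set_borel_integral_eq_integral(2))
  moreover have "\<phi> x = \<phi> p + (LBINT t:{p..x}. g t)"
    using assms unfolding H1_on_def by blast
  ultimately show ?thesis by simp
qed

lemma H1_integrable_on:
  assumes "H1_on p q \<phi> g"
  shows "g integrable_on {p..q}"
  using set_borel_integral_eq_integral(1)[OF H1_g_int[OF assms]] .

lemma H1_cont:
  assumes "H1_on p q \<phi> g"
  shows "continuous_on {p..q} \<phi>"
proof -
  have "continuous_on {p..q} (\<lambda>x. \<phi> p + integral {p..x} g)"
    using indefinite_integral_continuous_1[OF H1_integrable_on[OF assms]]
    by (intro continuous_intros)
  then show ?thesis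
  proof (rule continuous_on_eq)
    fix x assume "x \<in> {p..q}"
    from H1_HK[OF assms this] show "\<phi> p + integral {p..x} g = \<phi> x" by (rule sym)
  qed
qed

lemma H1_diff:
  assumes "H1_on p0 q0 \<phi> g" "p0 \<le> p" "p \<le> q" "q \<le> q0"
  shows "\<phi> q - \<phi> p = (LBINT t:{p..q}. g t)"
proof -
  have gi: "g integrable_on {p0..q}" using H1_integrable_on[OF assms(1)]
    by (rule integrable_on_subinterval) (use assms in auto)
  have "integral {p0..p} g + integral {p..q} g = integral {p0..q} g"
    using Henstock_Kurzweil_Integration.integral_combine[of p0 p q g] assms gi by auto
  moreover have "\<phi> q = \<phi> p0 + integral {p0..q} g" "\<phi> p = \<phi> p0 + integral {p0..p} g"
    using H1_HK[OF assms(1), of q] H1_HK[OF assms(1), of p] assms by auto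
  moreover have "(LBINT t:{p..q}. g t) = integral {p..q} g"
    using set_integrable_subset[OF H1_g_int[OF assms(1)]] assms
    by (intro set_borel_integral_eq_integral(2)) auto
  ultimately show ?thesis by simp
qed

lemma H1_diff_bound:
  assumes "H1_on p0 q0 \<phi> g" "p0 \<le> u" "u \<le> p" "p \<le> q" "q \<le> v" "v \<le> q0"
  shows "\<bar>\<phi> q - \<phi> p\<bar> \<le> (LBINT t:{u..v}. \<bar>g t\<bar>)"
proof -
  have iuv: "set_integrable lborel {u..v} g"
    using set_integrable_subset[OF H1_g_int[OF assms(1)]] assms by auto
  have ipq: "set_integrable lborel {p..q} g"
    using set_integrable_subset[OF iuv] assms by auto
  have "\<bar>\<phi> q - \<phi> p\<bar> = \<bar>LBINT t:{p..q}. g t\<bar>" using H1_diff[OF assms(1)] assms by simp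
  also have "\<dots> \<le> (LBINT t:{p..q}. \<bar>g t\<bar>)"
    using set_integral_norm_bound[OF ipq] by simp
  also have "\<dots> \<le> (LBINT t:{u..v}. \<bar>g t\<bar>)"
    by (rule set_int_mono_sets) (use set_integrable_abs[OF iuv] assms in auto)
  finally show ?thesis .
qed

lemma young_abs:
  fixes y t :: real assumes "0 < t"
  shows "\<bar>y\<bar> \<le> (t * y^2 + 1/t) / 2"
proof -
  have "0 \<le> (t * \<bar>y\<bar> - 1)^2" by simp
  then have "2 * t * \<bar>y\<bar> \<le> t^2 * y^2 + 1" by (simp add: power2_eq_square algebra_simps)
  then have "\<bar>y\<bar> \<le> (t^2 * y^2 + 1) / (2*t)" using assms by (simp add: field_simps)
  also have "\<dots> = (t * y^2 + 1/t) / 2" using assms by (simp add: field_simps power2_eq_square)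
  finally show ?thesis .
qed

lemma CS_bound:
  fixes g :: "real \<Rightarrow> real"
  assumes gi: "set_integrable lborel {u..v} g" and g2i: "set_integrable lborel {u..v} (\<lambda>x. (g x)^2)"
    and uv: "u < v" and G: "(LBINT x:{u..v}. (g x)^2) \<le> G" "0 < G"
  shows "(LBINT x:{u..v}. \<bar>g x\<bar>)^2 \<le> (v-u)*G"
proof -
  define t where "t = sqrt ((v-u)/G)"
  have t0: "0 < t" using uv G unfolding t_def by auto
  have ci: "set_integrable lborel {u..v} (\<lambda>x. 1/t)"
    by (rule borel_integrable_compact[unfolded set_integrable_def[symmetric]]) auto
  have "(LBINT x:{u..v}. \<bar>g x\<bar>) \<le> (LBINT x:{u..v}. (t * (g x)^2 + 1/t) / 2)"
    by (rule set_integral_mono) (use set_integrable_abs[OF gi] g2i ci young_abs[OF t0] in auto)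
  also have "\<dots> = (t * (LBINT x:{u..v}. (g x)^2) + (v-u)/t) / 2"
    using g2i ci uv by (simp add: set_integral_add set_integral_const)
  also have "\<dots> \<le> (t * G + (v-u)/t) / 2"
    using G t0 by (intro divide_right_mono add_right_mono mult_left_mono) auto
  also have "t * G = sqrt ((v-u)*G)"
  proof -
    have "t * G = sqrt ((v-u)/G) * sqrt (G^2)" using G unfolding t_def by simp
    also have "\<dots> = sqrt ((v-u)/G * G^2)" by (simp only: real_sqrt_mult)
    also have "(v-u)/G * G^2 = (v-u)*G" using G by (simp add: power2_eq_square)
    finally show ?thesis .
  qed
  also have "(v-u)/t = sqrt ((v-u)*G)"
  proof -
    have "(v-u)/t = sqrt ((v-u)^2) / sqrt ((v-u)/G)" using uv unfolding t_def by simp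
    also have "\<dots> = sqrt ((v-u)^2 / ((v-u)/G))" by (simp only: real_sqrt_divide)
    also have "(v-u)^2 / ((v-u)/G) = (v-u)*G" using G uv by (simp add: power2_eq_square)
    finally show ?thesis .
  qed
  finally have D: "(LBINT x:{u..v}. \<bar>g x\<bar>) \<le> sqrt ((v-u)*G)" by simp
  have D0: "0 \<le> (LBINT x:{u..v}. \<bar>g x\<bar>)"
    unfolding set_lebesgue_integral_def by (rule integral_nonneg_AE) (auto simp: indicator_def)
  have "(LBINT x:{u..v}. \<bar>g x\<bar>)^2 \<le> (sqrt ((v-u)*G))^2"
    using D D0 by (intro power_mono) auto
  also have "\<dots> = (v-u)*G" using uv G by simp
  finally show ?thesis .
qed

lemma sq_le_2:
  fixes x y D :: real assumes "\<bar>x - y\<bar> \<le> D"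
  shows "x^2 \<le> 2*y^2 + 2*D^2"
proof -
  have D0: "0 \<le> D" using assms by linarith
  have "(x-y)^2 \<le> D^2" using assms D0
    by (metis abs_le_square_iff abs_of_nonneg)
  moreover have "x^2 \<le> 2*y^2 + 2*(x-y)^2"
  proof -
    have "0 \<le> (x - 2*y)^2" by simp
    then show ?thesis by (simp add: power2_eq_square algebra_simps)
  qed
  ultimately show ?thesis by linarith
qed

lemma w_lower:
  fixes r s \<delta> P :: real and d :: nat
  assumes "0 \<le> s" "0 < \<delta>" "\<delta> \<le> r" "P \<le> m r"
  shows "\<delta>^(d-1) * exp (2 * s * P) \<le> r^(d-1) * exp (2 * s * m r)"
proof (rule mult_mono)
  show "\<delta>^(d-1) \<le> r^(d-1)" using assms by (intro power_mono) auto
  show "exp (2 * s * P) \<le> exp (2 * s * m r)" using assms by (auto intro: mult_left_mono)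
qed (use assms in auto)

lemma point_bound:
  fixes \<phi> g m :: "real \<Rightarrow> real" and s \<delta> P \<mu> L u v z :: real and d :: nat and I :: "real set"
  assumes H: "H1_on 0 1 \<phi> g"
    and wphi: "set_integrable lborel {0..1} (\<lambda>r. r^(d-1)*exp(2 * s * m r)*(\<phi> r)^2)"
      "(LBINT r:{0..1}. r^(d-1)*exp(2 * s * m r)*(\<phi> r)^2) = 1"
    and wg: "set_integrable lborel {0..1} (\<lambda>r. r^(d-1)*exp(2 * s * m r)*(g r)^2)"
      "(LBINT r:{0..1}. r^(d-1)*exp(2 * s * m r)*(g r)^2) \<le> L"
    and L0: "0 < L" and s0: "0 \<le> s" and \<delta>: "0 < \<delta>" "\<delta> \<le> u"
    and uz: "u \<le> z" "z \<le> v" "v \<le> 1" "u < v"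
    and I: "I \<subseteq> {u..v}" "I \<in> sets lborel" "0 < measure lborel I"
    and mI: "\<forall>r\<in>I. P \<le> m r" and muv: "\<forall>r\<in>{u..v}. - \<mu> \<le> m r"
  shows "(\<phi> z)^2 \<le> 2/(\<delta>^(d-1)*exp(2 * s * P)*measure lborel I) + 2*(v-u)*(L/(\<delta>^(d-1)*exp(2 * s * (-\<mu>))))"
proof -
  define w where "w r = r^(d-1)*exp(2 * s * m r)" for r
  define W0 where "W0 = \<delta>^(d-1)*exp(2 * s * (-\<mu>))"
  define Wp where "Wp = \<delta>^(d-1)*exp(2 * s * P)"
  define G where "G = L / W0"
  define D where "D = (LBINT x:{u..v}. \<bar>g x\<bar>)"
  have W00: "0 < W0" unfolding W0_def using \<delta> by simp
  have Wp0: "0 < Wp" unfolding Wp_def using \<delta> by simp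
  have G0: "0 < G" unfolding G_def using W00 L0 by simp
  have sub: "{u..v} \<subseteq> {0..1}" using \<delta> uz by auto
  have g2i: "set_integrable lborel {u..v} (\<lambda>x. (g x)^2)"
    using set_integrable_subset[of lborel "{0..1}" "\<lambda>x. (g x)^2" "{u..v}"] H sub
    unfolding H1_on_def by auto
  have gi: "set_integrable lborel {u..v} g"
    using set_integrable_subset[OF H1_g_int[OF H]] sub by auto
  have wguv: "set_integrable lborel {u..v} (\<lambda>r. w r * (g r)^2)"
    using set_integrable_subset[OF wg(1)] sub unfolding w_def by auto
  have "(LBINT x:{u..v}. (g x)^2) \<le> (LBINT x:{u..v}. w x * (g x)^2 / W0)"
  proof (rule set_integral_mono)
    show "set_integrable lborel {u..v} (\<lambda>x. w x * (g x)\<^sup>2 / W0)" using wguv by auto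
    fix x assume x: "x \<in> {u..v}"
    have "W0 \<le> w x" unfolding W0_def w_def using w_lower[OF s0 \<delta>(1), of x "-\<mu>" m] x \<delta> muv by auto
    then have "W0 * (g x)^2 \<le> w x * (g x)^2" by (intro mult_right_mono) auto
    then show "(g x)^2 \<le> w x * (g x)^2 / W0" using W00 by (simp add: field_simps)
  qed (rule g2i)
  also have "\<dots> = (LBINT x:{u..v}. w x * (g x)^2) / W0" by simp
  also have "(LBINT x:{u..v}. w x * (g x)^2) \<le> (LBINT x:{0..1}. w x * (g x)^2)"
    by (rule set_int_mono_sets) (use wg(1) sub in \<open>auto simp: w_def\<close>)
  finally have "(LBINT x:{u..v}. (g x)^2) \<le> (LBINT x:{0..1}. w x * (g x)^2) / W0"
    using W00 by (simp add: divide_right_mono)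
  also have "\<dots> \<le> G" unfolding G_def using wg(2) W00 by (simp add: w_def divide_right_mono)
  finally have g2G: "(LBINT x:{u..v}. (g x)^2) \<le> G" .
  have D2: "D^2 \<le> (v-u)*G" unfolding D_def by (rule CS_bound[OF gi g2i uz(4) g2G G0])
  have pt: "(\<phi> z)^2 \<le> 2 * (w r * (\<phi> r)^2) / Wp + 2 * D^2" if r: "r \<in> I" for r
  proof -
    have ruv: "r \<in> {u..v}" using r I by auto
    have "\<bar>\<phi> z - \<phi> r\<bar> \<le> D"
    proof (cases "r \<le> z")
      case True
      then show ?thesis unfolding D_def using H1_diff_bound[OF H, of u r z v] ruv uz \<delta> by auto
    next
      case False
      then show ?thesis unfolding D_def using H1_diff_bound[OF H, of u z r v] ruv uz \<delta> by auto
    qed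
    then have "(\<phi> z)^2 \<le> 2*(\<phi> r)^2 + 2*D^2" by (rule sq_le_2)
    moreover have "Wp \<le> w r" unfolding Wp_def w_def using w_lower[OF s0 \<delta>(1), of r P m] ruv \<delta> mI r by auto
    then have "Wp * (\<phi> r)^2 \<le> w r * (\<phi> r)^2" by (intro mult_right_mono) auto
    then have "(\<phi> r)^2 \<le> w r * (\<phi> r)^2 / Wp" using Wp0 by (simp add: field_simps)
    ultimately show ?thesis by simp
  qed
  have I01: "I \<subseteq> {0..1}" using I sub by auto
  have finI: "emeasure lborel I < \<infinity>"
  proof -
    have "emeasure lborel I \<le> emeasure lborel {0..1::real}" using I01 by (intro emeasure_mono) auto
    then show ?thesis by (simp add: le_less_trans)
  qed
  have wphiI: "set_integrable lborel I (\<lambda>r. w r * (\<phi> r)^2)"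
    using set_integrable_subset[OF wphi(1)] I01 I(2) unfolding w_def by auto
  have constI: "set_integrable lborel I (\<lambda>r. c)" for c :: real
    unfolding set_integrable_def using finI I(2) by (intro integrable_mult_right[of c] | simp)+
  have "(LBINT r:I. (\<phi> z)^2) \<le> (LBINT r:I. 2 * (w r * (\<phi> r)^2) / Wp + 2 * D^2)"
    by (rule set_integral_mono[OF constI]) (use wphiI constI pt in auto)
  also have "\<dots> = 2 * (LBINT r:I. w r * (\<phi> r)^2) / Wp + 2 * D^2 * measure lborel I"
    using wphiI constI finI I(2) by (simp add: set_integral_const)
  also have "(LBINT r:I. w r * (\<phi> r)^2) \<le> (LBINT r:{0..1}. w r * (\<phi> r)^2)"
    by (rule set_int_mono_sets) (use wphi(1) I01 I(2) in \<open>auto simp: w_def\<close>)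
  also have "(LBINT r:{0..1}. w r * (\<phi> r)^2) = 1" using wphi(2) by (simp add: w_def)
  finally have "measure lborel I * (\<phi> z)^2 \<le> 2 / Wp + 2 * D^2 * measure lborel I"
    using finI I(2) Wp0 by (simp add: set_integral_const divide_right_mono mult.commute)
  then have "(\<phi> z)^2 \<le> 2 / (Wp * measure lborel I) + 2 * D^2"
    using I(3) Wp0 by (simp add: field_simps)
  also have "\<dots> \<le> 2 / (Wp * measure lborel I) + 2*(v-u)*(L/W0)" 
  proof -
    have "2 * D^2 \<le> 2*((v-u)*G)" using D2 by simp
    moreover have "2*((v-u)*G) = 2*(v-u)*(L/W0)" unfolding G_def by (simp only: mult.assoc)
    ultimately show ?thesis by linarith
  qed
  finally show ?thesis unfolding Wp_def W0_def .
qed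

lemma nonneg_aux: "0 \<le> (x::real) \<Longrightarrow> 0 < cx \<Longrightarrow> 0 \<le> x^n * (A^2 + cx * B^2)"
  by (intro mult_nonneg_nonneg add_nonneg_nonneg) auto

lemma eigD_bdd: "bdd_below {(LBINT r:{a..b}. r^(d-1) * ((g r)^2 + c r * (\<phi> r)^2)) | \<phi> g.
       H1_on a b \<phi> g \<and> \<phi> a = 0 \<and> \<phi> b = 0 \<and> (LBINT r:{a..b}. r^(d-1) * (\<phi> r)^2) = 1}"
  if "0 \<le> a" "\<forall>r\<in>{a..b}. 0 < c r" for a b :: real and c :: "real \<Rightarrow> real" and d :: nat
proof (rule bdd_belowI[of _ 0], clarify)
  fix \<phi> g :: "real \<Rightarrow> real"
  show "0 \<le> (LBINT r:{a..b}. r^(d-1) * ((g r)^2 + c r * (\<phi> r)^2))"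
    unfolding set_lebesgue_integral_def
    by (rule integral_nonneg_AE, rule AE_I2) (use that in \<open>auto simp: indicator_def intro!: nonneg_aux\<close>)
qed

lemma dir_ineq:
  fixes \<psi> \<gamma> c :: "real \<Rightarrow> real" and a b :: real and d :: nat
  assumes H: "H1_on a b \<psi> \<gamma>" "\<psi> a = 0" "\<psi> b = 0" and a0: "0 \<le> a"
    and cpos: "\<forall>r\<in>{a..b}. 0 < c r"
  shows "eig_D d c a b * (LBINT r:{a..b}. r^(d-1) * (\<psi> r)^2) \<le> (LBINT r:{a..b}. r^(d-1) * ((\<gamma> r)^2 + c r * (\<psi> r)^2))"
proof -
  define N where "N = (LBINT r:{a..b}. r^(d-1) * (\<psi> r)^2)"
  define R where "R = (LBINT r:{a..b}. r^(d-1) * ((\<gamma> r)^2 + c r * (\<psi> r)^2))"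
  have N0: "0 \<le> N" unfolding N_def set_lebesgue_integral_def
    by (rule integral_nonneg_AE, rule AE_I2) (use a0 in \<open>auto simp: indicator_def\<close>)
  have R0: "0 \<le> R" unfolding R_def set_lebesgue_integral_def
    by (rule integral_nonneg_AE, rule AE_I2) (use a0 cpos in \<open>auto simp: indicator_def intro!: nonneg_aux\<close>)
  have "eig_D d c a b * N \<le> R"
  proof (cases "N = 0")
    case True then show ?thesis using R0 by (simp only: mult_zero_right)
  next
    case False
    then have Npos: "0 < N" using N0 by simp
    define t where "t = 1 / sqrt N"
    have t2: "t^2 = 1/N" unfolding t_def using Npos by (simp add: power_divide)
    have mem: "t^2 * R \<in> {(LBINT r:{a..b}. r^(d-1) * ((g r)^2 + c r * (\<phi> r)^2)) | \<phi> g.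
       H1_on a b \<phi> g \<and> \<phi> a = 0 \<and> \<phi> b = 0 \<and> (LBINT r:{a..b}. r^(d-1) * (\<phi> r)^2) = 1}"
    proof (intro CollectI exI conjI)
      show "t^2 * R = (LBINT r:{a..b}. r^(d-1) * ((t * \<gamma> r)^2 + c r * (t * \<psi> r)^2))"
      proof -
        have "(LBINT r:{a..b}. r^(d-1) * ((t * \<gamma> r)^2 + c r * (t * \<psi> r)^2))
            = (LBINT r:{a..b}. t^2 * (r^(d-1) * ((\<gamma> r)^2 + c r * (\<psi> r)^2)))"
          by (rule set_lebesgue_integral_cong) (auto simp: power_mult_distrib algebra_simps)
        then show ?thesis unfolding R_def by simp
      qed
      show "(LBINT r:{a..b}. r^(d-1) * (t * \<psi> r)^2) = 1"
      proof -
        have "(LBINT r:{a..b}. r^(d-1) * (t * \<psi> r)^2) = t^2 * N"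
        proof -
          have "(LBINT r:{a..b}. r^(d-1) * (t * \<psi> r)^2) = (LBINT r:{a..b}. t^2 * (r^(d-1) * (\<psi> r)^2))"
            by (rule set_lebesgue_integral_cong) (auto simp: power_mult_distrib algebra_simps)
          then show ?thesis unfolding N_def by simp
        qed
        then show ?thesis using t2 Npos by simp
      qed
      show "t * \<psi> a = 0" "t * \<psi> b = 0" using H by auto
      show "H1_on a b (\<lambda>x. t * \<psi> x) (\<lambda>x. t * \<gamma> x)"
        unfolding H1_on_def
      proof (intro conjI ballI)
        have "(\<lambda>x. indicator {a..b} x *\<^sub>R \<gamma> x) \<in> borel_measurable lborel"
          using H(1) unfolding H1_on_def set_borel_measurable_def by auto
        then have "(\<lambda>x. t * (indicator {a..b} x *\<^sub>R \<gamma> x)) \<in> borel_measurable lborel" by measurable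
        then show "set_borel_measurable lborel {a..b} (\<lambda>x. t * \<gamma> x)"
          unfolding set_borel_measurable_def by (simp add: algebra_simps)
        have "set_integrable lborel {a..b} (\<lambda>x. t^2 * (\<gamma> x)^2)"
          using H(1) unfolding H1_on_def by auto
        then show "set_integrable lborel {a..b} (\<lambda>x. (t * \<gamma> x)^2)"
          by (simp add: power_mult_distrib)
        fix x assume "x \<in> {a..b}"
        then have "\<psi> x = \<psi> a + (LBINT s:{a..x}. \<gamma> s)" using H(1) unfolding H1_on_def by blast
        then show "t * \<psi> x = t * \<psi> a + (LBINT s:{a..x}. t * \<gamma> s)" by (simp add: algebra_simps)
      qed
    qed
    have "eig_D d c a b \<le> t^2 * R"
      unfolding eig_D_def by (rule cInf_lower[OF mem eigD_bdd]) (use a0 cpos in auto)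
    then have "eig_D d c a b * N \<le> t^2 * R * N" using N0 by (rule mult_right_mono)
    also have "t^2 * R * N = R" using t2 Npos by simp
    finally show ?thesis .
  qed
  then show ?thesis unfolding N_def R_def .
qed

lemma ptwise_aux:
  fixes W g k C phi l e Bc :: real
  assumes W: "0 \<le> W" and l: "\<bar>l\<bar> \<le> e" and C: "\<bar>C\<bar> \<le> Bc"
  shows "W*((g-k)^2 + C*(phi-l)^2) \<le> W*g^2 + W*(C*phi^2) + ((\<bar>k\<bar> + k^2 + Bc*(e^2+e))*W + \<bar>k\<bar>*(W*g^2) + (Bc*e)*(W*phi^2))"
proof -
  have e0: "0 \<le> e" using l by linarith
  have Bc0: "0 \<le> Bc" using C by linarith
  have g2: "2*\<bar>g\<bar> \<le> 1 + g^2"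
  proof -
    have "0 \<le> (\<bar>g\<bar> - 1)^2" by simp
    then show ?thesis by (simp add: power2_eq_square algebra_simps abs_mult_self_eq)
  qed
  have p2: "2*\<bar>phi\<bar> \<le> 1 + phi^2"
  proof -
    have "0 \<le> (\<bar>phi\<bar> - 1)^2" by simp
    then show ?thesis by (simp add: power2_eq_square algebra_simps abs_mult_self_eq)
  qed
  have t1: "(g-k)^2 \<le> g^2 + \<bar>k\<bar>*(1 + g^2) + k^2"
  proof -
    have "-2*k*g \<le> \<bar>k\<bar>*(2*\<bar>g\<bar>)" by (simp add: abs_mult[symmetric] abs_le_iff)
    also have "\<dots> \<le> \<bar>k\<bar>*(1+g^2)" using g2 by (intro mult_left_mono) auto
    finally show ?thesis by (simp add: power2_eq_square algebra_simps)
  qed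
  have t2: "C*(l^2 - 2*phi*l) \<le> Bc*(e^2 + e*(1+phi^2))"
  proof -
    have "C*(l^2 - 2*phi*l) \<le> \<bar>C\<bar>*\<bar>l^2 - 2*phi*l\<bar>" by (simp add: abs_mult[symmetric] abs_le_iff)
    also have "\<bar>l^2 - 2*phi*l\<bar> \<le> e^2 + e*(1+phi^2)"
    proof -
      have "\<bar>l^2 - 2*phi*l\<bar> \<le> \<bar>l\<bar>^2 + \<bar>l\<bar>*(2*\<bar>phi\<bar>)" by (simp add: abs_mult power2_eq_square abs_triangle_ineq4 add_mono order_trans[OF abs_triangle_ineq4])
      also have "\<dots> \<le> e^2 + e*(1+phi^2)"
        using l e0 p2 by (intro add_mono power_mono mult_mono) auto
      finally show ?thesis .
    qed
    then have "\<bar>C\<bar>*\<bar>l^2 - 2*phi*l\<bar> \<le> Bc*(e^2 + e*(1+phi^2))"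
      using C by (intro mult_mono) auto
    finally show ?thesis .
  qed
  have "(g-k)^2 + C*(phi-l)^2 = (g-k)^2 + C*phi^2 + C*(l^2 - 2*phi*l)"
    by (simp add: power2_eq_square algebra_simps)
  also have "\<dots> \<le> g^2 + \<bar>k\<bar>*(1 + g^2) + k^2 + C*phi^2 + Bc*(e^2 + e*(1+phi^2))"
    using t1 t2 by linarith
  finally have "W*((g-k)^2 + C*(phi-l)^2) \<le> W*(g^2 + \<bar>k\<bar>*(1 + g^2) + k^2 + C*phi^2 + Bc*(e^2 + e*(1+phi^2)))"
    using W by (intro mult_left_mono)
  also have "\<dots> = W*g^2 + W*(C*phi^2) + ((\<bar>k\<bar> + k^2 + Bc*(e^2+e))*W + \<bar>k\<bar>*(W*g^2) + (Bc*e)*(W*phi^2))"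
    by (simp add: algebra_simps)
  finally show ?thesis .
qed

lemma cont_int:
  fixes f :: "real \<Rightarrow> real"
  shows "continuous_on {p..q} f \<Longrightarrow> set_integrable lborel {p..q} f"
  by (rule borel_integrable_compact[unfolded set_integrable_def[symmetric]]) auto

lemma arith1: "(D::real) \<noteq> 0 \<Longrightarrow> e*(2*(1+L)/D + 4/D^2 + 3*Bc) = 2*e/D + 4*e/D^2 + Bc*(2*e) + 2*e/D*L + Bc*e"
  by (simp add: field_simps power2_eq_square)

lemma dirichlet_part:
  fixes \<phi> g c :: "real \<Rightarrow> real" and a b L e Bc :: real and d :: nat
  assumes H: "H1_on 0 1 \<phi> g" and ab: "0 < a" "a < b" "b \<le> 1"
    and cc: "continuous_on {0..1} c" and cpos: "\<forall>r\<in>{a..b}. 0 < c r"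
    and Bc: "\<forall>r\<in>{a..b}. \<bar>c r - eig_D d c a b\<bar> \<le> Bc"
    and A1: "(LBINT r:{a..b}. r^(d-1)*(g r)^2) \<le> L" "0 \<le> L"
    and Aphi: "(LBINT r:{a..b}. r^(d-1)*(\<phi> r)^2) \<le> 1"
    and e: "\<bar>\<phi> a\<bar> \<le> e" "\<bar>\<phi> b\<bar> \<le> e" "e \<le> 1"
  shows "- e * (2*(1+L)/(b-a) + 4/(b-a)^2 + 3*Bc) \<le> (LBINT r:{a..b}. r^(d-1)*(g r)^2) + (LBINT r:{a..b}. r^(d-1)*((c r - eig_D d c a b)*(\<phi> r)^2))"
proof -
  define Lam where "Lam = eig_D d c a b"
  define W where "W r = r^(d-1)" for r :: real
  define k where "k = (\<phi> b - \<phi> a)/(b-a)"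
  define lf where "lf r = \<phi> a + (r - a)*k" for r
  define \<psi> where "\<psi> r = \<phi> r - lf r" for r
  define \<gamma> where "\<gamma> r = g r - k" for r
  have e0: "0 \<le> e" using e by linarith
  have Bc0: "0 \<le> Bc" using Bc ab by force
  have sub: "{a..b} \<subseteq> {0..1}" using ab by auto
  have Wc: "continuous_on {a..b} W" unfolding W_def by (intro continuous_intros)
  have \<phi>c: "continuous_on {a..b} \<phi>" using continuous_on_subset[OF H1_cont[OF H] sub] .
  have ccab: "continuous_on {a..b} c" using continuous_on_subset[OF cc sub] .
  have ig: "set_integrable lborel {a..b} g" using set_integrable_subset[OF H1_g_int[OF H]] sub by auto
  have ig2: "set_integrable lborel {a..b} (\<lambda>r. (g r)^2)"
    using set_integrable_subset[of lborel "{0..1}" "\<lambda>x. (g x)^2" "{a..b}"] H sub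
    unfolding H1_on_def by auto
  have iW: "set_integrable lborel {a..b} W" by (rule cont_int[OF Wc])
  have iWg: "set_integrable lborel {a..b} (\<lambda>r. W r * g r)" by (rule si_cont_mult[OF _ Wc ig]) auto
  have iWg2: "set_integrable lborel {a..b} (\<lambda>r. W r * (g r)^2)" by (rule si_cont_mult[OF _ Wc ig2]) auto
  have iWp2: "set_integrable lborel {a..b} (\<lambda>r. W r * (\<phi> r)^2)"
    by (rule cont_int) (use Wc \<phi>c in \<open>intro continuous_intros\<close>)
  have iWcp: "set_integrable lborel {a..b} (\<lambda>r. W r * ((c r - Lam) * (\<phi> r)^2))"
    by (rule cont_int) (use Wc \<phi>c ccab in \<open>intro continuous_intros\<close>)
  have \<psi>c: "continuous_on {a..b} \<psi>" unfolding \<psi>_def lf_def using \<phi>c by (intro continuous_intros)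
  have iWps2: "set_integrable lborel {a..b} (\<lambda>r. W r * (\<psi> r)^2)"
    by (rule cont_int) (use Wc \<psi>c in \<open>intro continuous_intros\<close>)
  have iWcps: "set_integrable lborel {a..b} (\<lambda>r. W r * (c r * (\<psi> r)^2))"
    by (rule cont_int) (use Wc \<psi>c ccab in \<open>intro continuous_intros\<close>)
  have iWga2: "set_integrable lborel {a..b} (\<lambda>r. W r * (\<gamma> r)^2)"
  proof -
    have "set_integrable lborel {a..b} (\<lambda>r. W r * (g r)^2 - (2*k) * (W r * g r) + k^2 * W r)"
      using iWg2 iWg iW by (intro set_integral_add set_integral_diff set_integrable_mult_right) auto
    then show ?thesis unfolding \<gamma>_def by (simp add: power2_eq_square algebra_simps)
  qed
  have iga2: "set_integrable lborel {a..b} (\<lambda>r. (\<gamma> r)^2)"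
  proof -
    have "set_integrable lborel {a..b} (\<lambda>r. (g r)^2 - (2*k) * g r + k^2)"
      using ig2 ig cont_int[of a b "\<lambda>_. k^2"] by (intro set_integral_add set_integral_diff set_integrable_mult_right) auto
    then show ?thesis unfolding \<gamma>_def by (simp add: power2_eq_square algebra_simps)
  qed
  have \<psi>a: "\<psi> a = 0" unfolding \<psi>_def lf_def by simp
  have \<psi>b: "\<psi> b = 0" unfolding \<psi>_def lf_def k_def using ab by (simp add: field_simps)
  have H2: "H1_on a b \<psi> \<gamma>"
    unfolding H1_on_def
  proof (intro conjI ballI)
    have "(\<lambda>x. indicator {a..b} x *\<^sub>R g x) \<in> borel_measurable lborel"
      using ig unfolding set_integrable_def by (rule borel_measurable_integrable)
    then have "(\<lambda>x. indicator {a..b} x *\<^sub>R g x - k * indicator {a..b} x) \<in> borel_measurable lborel"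
      by measurable
    then show "set_borel_measurable lborel {a..b} \<gamma>"
      unfolding set_borel_measurable_def \<gamma>_def by (simp add: algebra_simps)
    show "set_integrable lborel {a..b} (\<lambda>x. (\<gamma> x)^2)" by (rule iga2)
    fix x assume x: "x \<in> {a..b}"
    have igx: "set_integrable lborel {a..x} g" using set_integrable_subset[OF ig] x by auto
    have "(LBINT s:{a..x}. \<gamma> s) = (LBINT s:{a..x}. g s) - (LBINT s:{a..x}. k)"
      unfolding \<gamma>_def by (rule set_integral_diff(2)[OF igx cont_int]) auto
    also have "(LBINT s:{a..x}. k) = (x - a) * k" using x by (simp add: set_integral_const)
    also have "(LBINT s:{a..x}. g s) = \<phi> x - \<phi> a" using H1_diff[OF H, of a x] x ab by auto
    finally show "\<psi> x = \<psi> a + (LBINT s:{a..x}. \<gamma> s)" unfolding \<psi>a unfolding \<psi>_def lf_def by simp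
  qed
  have dir: "Lam * (LBINT r:{a..b}. W r * (\<psi> r)^2) \<le> (LBINT r:{a..b}. W r * ((\<gamma> r)^2 + c r * (\<psi> r)^2))"
    unfolding Lam_def W_def by (rule dir_ineq[OF H2 \<psi>a \<psi>b]) (use ab cpos in auto)
  have iR: "set_integrable lborel {a..b} (\<lambda>r. W r * ((\<gamma> r)^2 + c r * (\<psi> r)^2))"
    using set_integral_add(1)[OF iWga2 iWcps] by (simp add: algebra_simps)
  define E where "E r = (\<bar>k\<bar> + k^2 + Bc*(e^2+e))*W r + \<bar>k\<bar>*(W r*(g r)^2) + (Bc*e)*(W r*(\<phi> r)^2)" for r
  have iE: "set_integrable lborel {a..b} E"
    unfolding E_def using iW iWg2 iWp2 by (intro set_integral_add set_integrable_mult_right) auto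
  have lfb: "\<bar>lf r\<bar> \<le> e" if r: "r \<in> {a..b}" for r
  proof -
    define th where "th = (r - a)/(b-a)"
    have th01: "0 \<le> th" "th \<le> 1" unfolding th_def using r ab by auto
    have "lf r = \<phi> a + th*(\<phi> b - \<phi> a)" unfolding lf_def k_def th_def by simp
    then have "lf r = (1-th)*\<phi> a + th*\<phi> b" by (simp add: algebra_simps)
    then have "\<bar>lf r\<bar> = \<bar>(1-th)*\<phi> a + th*\<phi> b\<bar>" by simp
    also have "\<dots> \<le> \<bar>(1-th)*\<phi> a\<bar> + \<bar>th*\<phi> b\<bar>" by (rule abs_triangle_ineq)
    also have "\<dots> = (1-th)*\<bar>\<phi> a\<bar> + th*\<bar>\<phi> b\<bar>" using th01 by (simp add: abs_mult)
    also have "\<dots> \<le> (1-th)*e + th*e" using th01 e by (intro add_mono mult_left_mono) auto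
    finally show ?thesis by (simp add: algebra_simps)
  qed
  have "0 \<le> (LBINT r:{a..b}. W r * ((\<gamma> r)^2 + c r * (\<psi> r)^2)) - Lam * (LBINT r:{a..b}. W r * (\<psi> r)^2)"
    using dir by simp
  also have "\<dots> = (LBINT r:{a..b}. W r * ((\<gamma> r)^2 + c r * (\<psi> r)^2) - Lam * (W r * (\<psi> r)^2))"
    using iR iWps2 by simp
  also have "\<dots> \<le> (LBINT r:{a..b}. W r * (g r)^2 + W r * ((c r - Lam) * (\<phi> r)^2) + E r)"
  proof (rule set_integral_mono)
    show "set_integrable lborel {a..b} (\<lambda>r. W r * ((\<gamma> r)^2 + c r * (\<psi> r)^2) - Lam * (W r * (\<psi> r)^2))"
      using iR iWps2 by auto
    show "set_integrable lborel {a..b} (\<lambda>r. W r * (g r)^2 + W r * ((c r - Lam) * (\<phi> r)^2) + E r)"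
      using iWg2 iWcp iE by auto
    fix r assume r: "r \<in> {a..b}"
    have "W r * ((\<gamma> r)^2 + c r * (\<psi> r)^2) - Lam * (W r * (\<psi> r)^2) = W r * ((g r - k)^2 + (c r - Lam) * (\<phi> r - lf r)^2)"
      unfolding \<gamma>_def \<psi>_def by (simp add: algebra_simps)
    also have "\<dots> \<le> W r * (g r)^2 + W r * ((c r - Lam) * (\<phi> r)^2) + E r"
      unfolding E_def using ptwise_aux[of "W r" "lf r" e "c r - Lam" Bc "g r" k "\<phi> r"] lfb[OF r] Bc r ab
      unfolding Lam_def W_def by auto
    finally show "W r * ((\<gamma> r)^2 + c r * (\<psi> r)^2) - Lam * (W r * (\<psi> r)^2) \<le> W r * (g r)^2 + W r * ((c r - Lam) * (\<phi> r)^2) + E r" .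
  qed
  also have "\<dots> = (LBINT r:{a..b}. W r * (g r)^2) + (LBINT r:{a..b}. W r * ((c r - Lam) * (\<phi> r)^2)) + (LBINT r:{a..b}. E r)"
    using iWg2 iWcp iE by simp
  finally have main: "0 \<le> (LBINT r:{a..b}. W r * (g r)^2) + (LBINT r:{a..b}. W r * ((c r - Lam) * (\<phi> r)^2)) + (LBINT r:{a..b}. E r)" .
  define IW where "IW = (LBINT r:{a..b}. W r)"
  define IG where "IG = (LBINT r:{a..b}. W r * (g r)^2)"
  define IP where "IP = (LBINT r:{a..b}. W r * (\<phi> r)^2)"
  have IE: "(LBINT r:{a..b}. E r) = (\<bar>k\<bar> + k^2 + Bc*(e^2+e))*IW + \<bar>k\<bar>*IG + (Bc*e)*IP"
    unfolding E_def IW_def IG_def IP_def using iW iWg2 iWp2 by simp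
  have nonneg: "0 \<le> (LBINT r:{a..b}. f r)" if "\<And>r. r \<in> {a..b} \<Longrightarrow> 0 \<le> f r" for f :: "real \<Rightarrow> real"
    unfolding set_lebesgue_integral_def by (rule integral_nonneg_AE, rule AE_I2) (use that in \<open>auto simp: indicator_def\<close>)
  have IW0: "0 \<le> IW" unfolding IW_def W_def by (rule nonneg) (use ab in auto)
  have IW1: "IW \<le> 1"
  proof -
    have "IW \<le> (LBINT r:{a..b}. (1::real))" unfolding IW_def
      by (rule set_integral_mono[OF iW cont_int]) (use ab in \<open>auto simp: W_def intro!: power_le_one\<close>)
    also have "\<dots> = b - a" using ab by (simp add: set_integral_const)
    finally show ?thesis using ab by simp
  qed
  have IG0: "0 \<le> IG" unfolding IG_def W_def by (rule nonneg) (use ab in auto)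
  have IGL: "IG \<le> L" using A1(1) unfolding IG_def W_def .
  have IP0: "0 \<le> IP" unfolding IP_def W_def by (rule nonneg) (use ab in auto)
  have IP1: "IP \<le> 1" using Aphi unfolding IP_def W_def .
  have kb: "\<bar>k\<bar> \<le> 2*e/(b-a)"
  proof -
    have "\<bar>\<phi> b - \<phi> a\<bar> \<le> 2*e" using e by linarith
    then have "\<bar>\<phi> b - \<phi> a\<bar> / (b-a) \<le> 2*e/(b-a)" using ab by (intro divide_right_mono) auto
    moreover have "\<bar>k\<bar> = \<bar>\<phi> b - \<phi> a\<bar> / (b-a)" unfolding k_def using ab by (simp add: abs_divide)
    ultimately show ?thesis by simp
  qed
  have k2: "k^2 \<le> 4*e/(b-a)^2"
  proof -
    have "\<bar>k\<bar>^2 \<le> (2*e/(b-a))^2" by (rule power_mono[OF kb abs_ge_zero])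
    then have "k^2 \<le> (2*e/(b-a))^2" by simp
    also have "\<dots> = 4*e^2/(b-a)^2" by (simp add: power_divide power_mult_distrib)
    also have "\<dots> \<le> 4*e/(b-a)^2" using e e0 by (intro divide_right_mono) (auto simp: power2_eq_square mult_left_le_one_le)
    finally show ?thesis .
  qed
  have "(\<bar>k\<bar> + k^2 + Bc*(e^2+e))*IW \<le> (\<bar>k\<bar> + k^2 + Bc*(e^2+e))"
    using IW0 IW1 Bc0 e0 by (intro mult_left_le) auto
  also have "\<dots> \<le> 2*e/(b-a) + 4*e/(b-a)^2 + Bc*(2*e)"
  proof -
    have "e^2 \<le> e" using e e0 by (simp add: power2_eq_square mult_left_le_one_le)
    then have "Bc*(e^2+e) \<le> Bc*(2*e)" using Bc0 by (intro mult_left_mono) auto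
    then show ?thesis using kb k2 by linarith
  qed
  finally have t1: "(\<bar>k\<bar> + k^2 + Bc*(e^2+e))*IW \<le> 2*e/(b-a) + 4*e/(b-a)^2 + Bc*(2*e)" .
  have t2: "\<bar>k\<bar>*IG \<le> 2*e/(b-a)*L" using kb IG0 IGL by (intro mult_mono) auto
  have t3: "(Bc*e)*IP \<le> Bc*e" using Bc0 e0 IP0 IP1 by (intro mult_left_le) auto
  have "(LBINT r:{a..b}. E r) \<le> e * (2*(1+L)/(b-a) + 4/(b-a)^2 + 3*Bc)"
  proof -
    have "e * (2*(1+L)/(b-a) + 4/(b-a)^2 + 3*Bc) = 2*e/(b-a) + 4*e/(b-a)^2 + Bc*(2*e) + 2*e/(b-a)*L + Bc*e"
      using ab by (intro arith1) auto
    then show ?thesis unfolding IE using t1 t2 t3 by linarith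
  qed
  then show ?thesis using main unfolding Lam_def W_def by linarith
qed


lemma arA1: fixes p q h \<nu> :: real assumes "0 < p" "0 < h" "1 < \<nu>"
  shows "q/p - 2*\<nu>*h*(q / (p * h * (\<nu> + 1))) = - ((q/p) * ((\<nu> - 1)/(\<nu> + 1)))"
proof -
  have ne: "\<nu> + 1 \<noteq> 0" "p \<noteq> 0" "h \<noteq> 0" using assms by auto
  show ?thesis using ne by (simp add: divide_simps) (simp add: algebra_simps)
qed
lemma arA2: fixes p q h \<nu> :: real assumes "0 < p" "0 < h" "1 < \<nu>"
  shows "- (q/p) + 2*h*(q / (p * h * (\<nu> + 1))) = - ((q/p) * ((\<nu> - 1)/(\<nu> + 1)))"
proof -
  have ne: "\<nu> + 1 \<noteq> 0" "p \<noteq> 0" "h \<noteq> 0" using assms by auto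
  show ?thesis using ne by (simp add: divide_simps) (simp add: algebra_simps)
qed

lemma asym:
  fixes h \<beta> \<nu> C \<epsilon> :: real
  assumes h0: "0 < h" and h\<beta>: "h < \<beta>" and \<beta>1: "\<beta> < 1" and \<nu>1: "1 < \<nu>" and C0: "0 < C" and \<epsilon>0: "0 < \<epsilon>"
  shows "eventually (\<lambda>s. \<exists>n::nat. C * (exp (-(2 * s * \<nu> * h^n)) / \<beta>^n + \<beta>^n * exp (2 * s * h^(n+1))) \<le> \<epsilon>) at_top"
proof -
  define p where "p = - ln h"
  define q where "q = - ln \<beta>"
  have \<beta>0: "0 < \<beta>" using h0 h\<beta> by simp
  have q0: "0 < q" unfolding q_def using \<beta>0 \<beta>1 by simp
  have qp: "q < p" unfolding q_def p_def using h0 h\<beta> by simp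
  have p0: "0 < p" using q0 qp by simp
  have hp: "h = exp (-p)" unfolding p_def using h0 by simp
  have \<beta>q: "\<beta> = exp (-q)" unfolding q_def using \<beta>0 by simp
  define \<kappa> where "\<kappa> = q / (p * h * (\<nu> + 1))"
  have \<kappa>0: "0 < \<kappa>" unfolding \<kappa>_def using q0 p0 h0 \<nu>1 by simp
  define A where "A = (q/p) * ((\<nu> - 1)/(\<nu> + 1))"
  have A0: "0 < A" unfolding A_def using q0 p0 \<nu>1 by simp
  have A1: "q/p - 2*\<nu>*h*\<kappa> = - A" unfolding A_def \<kappa>_def using p0 h0 \<nu>1 by (rule arA1)
  have A2: "- (q/p) + 2*h*\<kappa> = - A" unfolding A_def \<kappa>_def using p0 h0 \<nu>1 by (rule arA2)
  have ev1: "eventually (\<lambda>s. 1/\<kappa> \<le> ln s) at_top"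
    using ln_at_top unfolding filterlim_at_top by auto
  have ev2: "eventually (\<lambda>s. ln s / s < 1/\<kappa>) at_top"
  proof -
    have "((\<lambda>s::real. ln s / s) \<longlongrightarrow> 0) at_top" by real_asymp
    then show ?thesis using \<kappa>0 by (intro order_tendstoD(2)) auto
  qed
  have ev3: "eventually (\<lambda>s. ln (ln s) / ln s < (A/4) * (p/q)) at_top"
  proof -
    have "((\<lambda>s::real. ln (ln s) / ln s) \<longlongrightarrow> 0) at_top" by real_asymp
    then show ?thesis using A0 p0 q0 by (intro order_tendstoD(2)) auto
  qed
  have ev4: "eventually (\<lambda>s. (q/p) * ln \<kappa> \<le> (A/4) * ln s) at_top"
  proof -
    have "eventually (\<lambda>s. (q/p) * ln \<kappa> / (A/4) \<le> ln s) at_top"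
      using ln_at_top unfolding filterlim_at_top by auto
    then show ?thesis
    proof eventually_elim
      case (elim s)
      have A4: "0 < A/4" using A0 by simp
      from elim have "(q/p) * ln \<kappa> \<le> ln s * (A/4)" by (simp only: pos_divide_le_eq[OF A4])
      then show ?case by (simp add: mult.commute)
    qed
  qed
  have ev5: "eventually (\<lambda>s. C * (exp q * s powr (-A) + s powr (-(A/2))) < \<epsilon>) at_top"
  proof -
    have "((\<lambda>s::real. s powr (-A)) \<longlongrightarrow> 0) at_top"
      using A0 by (intro tendsto_neg_powr filterlim_ident) auto
    moreover have "((\<lambda>s::real. s powr (-(A/2))) \<longlongrightarrow> 0) at_top"
      using A0 by (intro tendsto_neg_powr filterlim_ident) auto
    ultimately have "((\<lambda>s::real. C * (exp q * s powr (-A) + s powr (-(A/2)))) \<longlongrightarrow> C * (exp q * 0 + 0)) at_top"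
      by (intro tendsto_intros)
    then show ?thesis using \<epsilon>0 by (intro order_tendstoD(2)) auto
  qed
  have ev6: "eventually (\<lambda>s. (1::real) < s) at_top" by (rule eventually_gt_at_top)
  show ?thesis
    using ev1 ev2 ev3 ev4 ev5 ev6
  proof eventually_elim
    case (elim s)
    have s1: "1 < s" using elim by simp
    have ls: "0 < ln s" using s1 by simp
    define \<tau> where "\<tau> = \<kappa> * ln s"
    have \<tau>1: "1 \<le> \<tau>" unfolding \<tau>_def using elim(1) \<kappa>0 by (simp add: field_simps)
    have \<tau>s: "\<tau> < s" unfolding \<tau>_def using elim(2) \<kappa>0 s1 by (simp add: field_simps)
    define X where "X = (ln s - ln \<tau>) / p"
    have X0: "0 \<le> X" unfolding X_def using \<tau>s \<tau>1 p0 by simp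
    define n where "n = nat \<lceil>X\<rceil>"
    have nX: "X \<le> real n" "real n < X + 1" unfolding n_def using X0 by linarith+
    have hn: "h^n = exp (-(p * real n))" using hp by (simp add: exp_of_nat_mult[symmetric] algebra_simps)
    have \<beta>n: "\<beta>^n = exp (-(q * real n))" using \<beta>q by (simp add: exp_of_nat_mult[symmetric] algebra_simps)
    have sX: "s * exp (-(p * X)) = \<tau>"
    proof -
      have "-(p*X) = ln \<tau> - ln s" unfolding X_def using p0 by simp
      then have "exp (-(p*X)) = \<tau> / s" using \<tau>1 s1 by (simp add: exp_diff)
      then show ?thesis using s1 by simp
    qed
    have shn_le: "s * h^n \<le> \<tau>"
    proof -
      have "s * h^n \<le> s * exp (-(p * X))" unfolding hn using nX p0 s1 by (intro mult_left_mono) auto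
      then show ?thesis using sX by simp
    qed
    have shn_ge: "h * \<tau> \<le> s * h^n"
    proof -
      have "p * real n \<le> p * (X+1)" using nX p0 by (intro mult_left_mono) auto
      then have le: "exp (-(p * X) + -p) \<le> exp (-(p * real n))" by (simp add: algebra_simps)
      have "exp (-(p * X)) * exp (-p) = exp (-(p * X) + -p)" by (simp only: exp_add)
      also have "\<dots> \<le> h^n" using le hn by simp
      finally have "exp (-(p * X)) * exp (-p) \<le> h^n" .
      then have "s * (exp (-(p * X)) * exp (-p)) \<le> s * h^n" using s1 by (intro mult_left_mono) auto
      moreover have "s * (exp (-(p * X)) * exp (-p)) = h * \<tau>"
      proof -
        have "s * (exp (-(p * X)) * exp (-p)) = (s * exp (-(p * X))) * exp (-p)" by (simp only: mult.assoc)
        also have "\<dots> = \<tau> * h" using sX hp by simp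
        finally show ?thesis by (simp only: mult.commute)
      qed
      ultimately show ?thesis by simp
    qed
    have t1: "exp (-(2 * s * \<nu> * h^n)) / \<beta>^n \<le> exp q * s powr (-A)"
    proof -
      have "exp (-(2 * s * \<nu> * h^n)) / \<beta>^n = exp (q * real n - 2 * \<nu> * (s * h^n))"
        unfolding \<beta>n by (simp add: exp_diff exp_minus field_simps)
      also have "\<dots> \<le> exp (q * (X + 1) - 2 * \<nu> * (h * \<tau>))"
        using nX q0 shn_ge \<nu>1 by (intro exp_mono diff_mono mult_left_mono) auto
      also have "q * (X + 1) - 2 * \<nu> * (h * \<tau>) = (q/p) * (ln s - ln \<tau>) + q - 2*\<nu>*h*\<kappa> * ln s"
        unfolding X_def \<tau>_def using p0 by (simp add: field_simps)
      also have "\<dots> \<le> (q/p - 2*\<nu>*h*\<kappa>) * ln s + q"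
        using \<tau>1 q0 p0 by (simp add: algebra_simps)
      also have "\<dots> = q + (-A) * ln s" using A1 by simp
      also have "exp (q + (-A) * ln s) = exp q * s powr (-A)"
      proof -
        have "exp (q + (-A) * ln s) = exp q * exp ((-A) * ln s)" by (simp only: exp_add)
        also have "exp ((-A) * ln s) = s powr (-A)" using s1 by (simp add: powr_def)
        finally show ?thesis .
      qed
      finally show ?thesis by simp
    qed
    have t2: "\<beta>^n * exp (2 * s * h^(n+1)) \<le> s powr (-(A/2))"
    proof -
      have "\<beta>^n * exp (2 * s * h^(n+1)) = exp (- (q * real n) + 2 * h * (s * h^n))"
        unfolding \<beta>n by (simp add: exp_add[symmetric] algebra_simps)
      also have "\<dots> \<le> exp (- (q * X) + 2 * h * \<tau>)"
        using nX q0 shn_le h0 by (intro exp_mono add_mono mult_left_mono) auto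
      also have "- (q * X) + 2 * h * \<tau> = (- (q/p) + 2*h*\<kappa>) * ln s + (q/p) * ln \<tau>"
        unfolding X_def \<tau>_def using p0 by (simp add: field_simps)
      also have "\<dots> = (-A) * ln s + ((q/p) * ln \<kappa> + (q/p) * ln (ln s))"
        unfolding A2 \<tau>_def using \<kappa>0 ls by (simp add: ln_mult algebra_simps)
      also have "\<dots> \<le> (-A) * ln s + ((A/4) * ln s + (A/4) * ln s)"
      proof -
        have "(q/p) * ln (ln s) \<le> (A/4) * ln s"
        proof -
          have "ln (ln s) < (A/4) * (p/q) * ln s" using elim(3) ls by (simp add: field_simps)
          then have "(q/p) * ln (ln s) \<le> (q/p) * ((A/4) * (p/q) * ln s)" using p0 q0
            by (intro mult_left_mono) auto
          also have "\<dots> = (A/4) * ln s" using p0 q0 by (simp add: field_simps)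
          finally show ?thesis .
        qed
        then show ?thesis using elim(4) by linarith
      qed
      also have "\<dots> = -(A/2) * ln s" by simp
      also have "exp (-(A/2) * ln s) = s powr (-(A/2))" using s1 by (simp add: powr_def mult.commute)
      finally show ?thesis by simp
    qed
    show ?case
    proof (intro exI)
      have "C * (exp (-(2 * s * \<nu> * h^n)) / \<beta>^n + \<beta>^n * exp (2 * s * h^(n+1))) \<le> C * (exp q * s powr (-A) + s powr (-(A/2)))"
        using t1 t2 C0 by (intro mult_left_mono add_mono) auto
      then show "C * (exp (-(2 * s * \<nu> * h^n)) / \<beta>^n + \<beta>^n * exp (2 * s * h^(n+1))) \<le> \<epsilon>" using elim(5) by linarith
    qed
  qed
qed


lemma xs_sum: "xs_pt \<delta> \<alpha> \<beta> l n = \<delta> + (\<Sum>i<n. \<alpha>^(Suc i + l) + \<beta>^(Suc i + l))"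
  unfolding xs_pt_def by (simp add: sum.atLeast1_atMost_eq)

lemma xs_Suc: "xs_pt \<delta> \<alpha> \<beta> l (Suc n) = ys_pt \<delta> \<alpha> \<beta> l n + \<beta>^(n+l+1)"
  unfolding ys_pt_def xs_sum by simp

lemma ys_eq: "ys_pt \<delta> \<alpha> \<beta> l n = xs_pt \<delta> \<alpha> \<beta> l n + \<alpha>^(n+l+1)"
  unfolding ys_pt_def by simp

lemma seq_basic:
  fixes \<delta> \<alpha> \<beta> a :: real and l :: nat
  assumes pos: "0 < \<alpha>" "\<alpha> < \<beta>" "\<beta> < 1"
    and sm: "(\<lambda>i. \<alpha>^(Suc i + l) + \<beta>^(Suc i + l)) sums (a - \<delta>)"
  shows "\<delta> \<le> xs_pt \<delta> \<alpha> \<beta> l n"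
    and "xs_pt \<delta> \<alpha> \<beta> l n < a"
    and "a - xs_pt \<delta> \<alpha> \<beta> l n \<le> 2*\<beta>^(n+l+1)/(1-\<beta>)"
    and "xs_pt \<delta> \<alpha> \<beta> l n \<le> xs_pt \<delta> \<alpha> \<beta> l (n + k)"
    and "(\<lambda>n. xs_pt \<delta> \<alpha> \<beta> l n) \<longlonglongrightarrow> a"
proof -
  define f where "f i = \<alpha>^(Suc i + l) + \<beta>^(Suc i + l)" for i
  have fpos: "0 < f i" for i unfolding f_def using pos by (simp add: add_pos_pos)
  have sm': "f sums (a - \<delta>)" using sm unfolding f_def .
  have xs: "xs_pt \<delta> \<alpha> \<beta> l n = \<delta> + sum f {..<n}" for n unfolding f_def by (rule xs_sum)
  show "\<delta> \<le> xs_pt \<delta> \<alpha> \<beta> l n" unfolding xs using fpos by (simp add: sum_nonneg less_imp_le)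
  have tail: "(\<lambda>i. f (i + n)) sums (a - xs_pt \<delta> \<alpha> \<beta> l n)"
    using sums_split_initial_segment[OF sm', of n] unfolding xs by (simp add: algebra_simps)
  show "xs_pt \<delta> \<alpha> \<beta> l n < a"
  proof -
    have "0 < suminf (\<lambda>i. f (i + n))" using tail fpos by (intro suminf_pos) (auto simp: sums_iff)
    then show ?thesis using tail by (simp add: sums_iff)
  qed
  show "a - xs_pt \<delta> \<alpha> \<beta> l n \<le> 2*\<beta>^(n+l+1)/(1-\<beta>)"
  proof -
    have g: "(\<lambda>i. (2*\<beta>^(n+l+1)) * \<beta>^i) sums ((2*\<beta>^(n+l+1)) * (1/(1-\<beta>)))"
      using pos by (intro sums_mult geometric_sums) auto
    have "f (i + n) \<le> (2*\<beta>^(n+l+1)) * \<beta>^i" for i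
    proof -
      have "\<alpha>^(Suc (i+n) + l) \<le> \<beta>^(Suc (i+n) + l)" using pos by (intro power_mono) auto
      moreover have "\<beta>^(Suc (i+n) + l) = \<beta>^(n+l+1) * \<beta>^i" by (simp only: power_add[symmetric]) (simp add: algebra_simps)
      moreover have "f (i+n) = \<alpha>^(Suc (i+n) + l) + \<beta>^(Suc (i+n) + l)" by (simp only: f_def)
      ultimately have "f (i + n) \<le> 2 * (\<beta>^(n+l+1) * \<beta>^i)" by linarith
      then show ?thesis by (simp only: mult.assoc)
    qed
    then have "a - xs_pt \<delta> \<alpha> \<beta> l n \<le> (2*\<beta>^(n+l+1)) * (1/(1-\<beta>))"
      by (rule sums_le[OF _ tail g])
    then show ?thesis by simp
  qed
  show "xs_pt \<delta> \<alpha> \<beta> l n \<le> xs_pt \<delta> \<alpha> \<beta> l (n + k)"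
    unfolding xs using fpos by (intro add_left_mono sum_mono2) (auto simp: less_imp_le)
  have "(\<lambda>n. sum f {..<n}) \<longlonglongrightarrow> a - \<delta>" using sm' by (simp add: sums_def)
  then have "(\<lambda>n. \<delta> + sum f {..<n}) \<longlonglongrightarrow> \<delta> + (a - \<delta>)" by (intro tendsto_intros)
  then show "(\<lambda>n. xs_pt \<delta> \<alpha> \<beta> l n) \<longlonglongrightarrow> a" unfolding xs by simp
qed

lemma m_bound:
  fixes \<delta> h \<alpha> \<beta> \<nu> a :: real and l :: nat and m :: "real \<Rightarrow> real"
  assumes pos: "0 < h" "h < \<alpha>" "\<alpha> < \<beta>" "\<beta> < 1" "1 < \<nu>"
    and sm: "(\<lambda>i. \<alpha>^(Suc i + l) + \<beta>^(Suc i + l)) sums (a - \<delta>)"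
    and ab: "above_step m \<delta> h \<alpha> \<beta> \<nu> l"
    and ma: "m a = 0" "m (1 - a) = 0"
    and r: "r \<in> {ys_pt \<delta> \<alpha> \<beta> l n..a}"
  shows "- (h^(n+1)) \<le> m r \<and> - (h^(n+1)) \<le> m (1 - r)"
proof (cases "r = a")
  case True then show ?thesis using ma pos by simp
next
  case False
  let ?x = "xs_pt \<delta> \<alpha> \<beta> l" and ?y = "ys_pt \<delta> \<alpha> \<beta> l"
  have \<alpha>0: "0 < \<alpha>" using pos by simp
  have ra: "r < a" using r False by auto
  have "eventually (\<lambda>K. r < ?x K) sequentially"
    using seq_basic(5)[OF \<alpha>0 pos(3,4) sm] ra by (rule order_tendstoD(1))
  then obtain K where K: "r < ?x K" by (auto simp: eventually_sequentially)
  define K0 where "K0 = (LEAST K. r < ?x K)"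
  have K0: "r < ?x K0" unfolding K0_def by (rule LeastI[of _ K], rule K)
  have xy: "?x j \<le> ?y j" for j unfolding ys_eq using pos by simp
  have notlt: "\<not> r < ?x j" if "j \<le> n" for j
  proof -
    have "?x j \<le> ?x (j + (n - j))" by (rule seq_basic(4)[OF \<alpha>0 pos(3,4) sm])
    then have "?x j \<le> ?x n" using that by simp
    then show ?thesis using xy[of n] r by auto
  qed
  have "n < K0"
  proof (rule ccontr)
    assume "\<not> n < K0" then have "K0 \<le> n" by simp
    then show False using notlt K0 by blast
  qed
  then obtain k where k: "K0 = Suc k" "n \<le> k" by (cases K0) auto
  have xk: "?x k \<le> r"
  proof -
    have "\<not> r < ?x k" unfolding K0_def[symmetric] using not_less_Least[of k "\<lambda>K. r < ?x K"] k K0_def by auto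
    then show ?thesis by simp
  qed
  have xk1: "r < ?x (Suc k)" using K0 k by simp
  show ?thesis
  proof (cases "r < ?y k")
    case True
    then have "k \<noteq> n" using r by auto
    then have "n + 1 \<le> k" using k by simp
    then have hk: "h^k \<le> h^(n+1)" using pos by (intro power_decreasing) auto
    have "- (h^k) \<le> m r \<and> - (h^k) \<le> m (1 - r)"
      using ab xk True unfolding above_step_def by auto
    then show ?thesis using hk by linarith
  next
    case False
    then have "\<nu> * h^k \<le> m r \<and> \<nu> * h^k \<le> m (1 - r)"
      using ab xk1 unfolding above_step_def by auto
    moreover have "0 \<le> \<nu> * h^k" using pos by simp
    moreover have "0 \<le> h^(n+1)" using pos by simp
    ultimately show ?thesis by linarith
  qed
qed


lemma boundary_bound:
  fixes \<phi> g m :: "real \<Rightarrow> real" and s L a b \<delta> h \<alpha> \<beta> \<nu> :: real and d l n :: nat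
  assumes H: "H1_on 0 1 \<phi> g"
    and wphi: "set_integrable lborel {0..1} (\<lambda>r. r^(d-1)*exp(2 * s * m r)*(\<phi> r)^2)"
      "(LBINT r:{0..1}. r^(d-1)*exp(2 * s * m r)*(\<phi> r)^2) = 1"
    and wg: "set_integrable lborel {0..1} (\<lambda>r. r^(d-1)*exp(2 * s * m r)*(g r)^2)"
      "(LBINT r:{0..1}. r^(d-1)*exp(2 * s * m r)*(g r)^2) \<le> L"
    and L0: "0 < L" and s0: "0 \<le> s"
    and ab: "a < b" "b < 1" "a + b = 1"
    and par: "0 < \<delta>" "\<delta> < a" "0 < h" "h < \<alpha>" "\<alpha> < \<beta>" "\<beta> < 1" "1 < \<nu>"
    and sm: "(\<lambda>i. \<alpha>^(Suc i + l) + \<beta>^(Suc i + l)) sums (a - \<delta>)"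
    and abv: "above_step m \<delta> h \<alpha> \<beta> \<nu> l"
    and ma: "m a = 0" "m b = 0"
  shows "(\<phi> a)^2 \<le> 2/(\<delta>^(d-1)*exp(2 * s * (\<nu>*h^n))*\<beta>^(n+l+1)) + 2*(2*\<beta>^(n+l+1)/(1-\<beta>))*(L/(\<delta>^(d-1)*exp(2 * s * (-(h^(n+1))))))"
    and "(\<phi> b)^2 \<le> 2/(\<delta>^(d-1)*exp(2 * s * (\<nu>*h^n))*\<beta>^(n+l+1)) + 2*(2*\<beta>^(n+l+1)/(1-\<beta>))*(L/(\<delta>^(d-1)*exp(2 * s * (-(h^(n+1))))))"
proof -
  let ?x = "xs_pt \<delta> \<alpha> \<beta> l" and ?y = "ys_pt \<delta> \<alpha> \<beta> l"
  have \<alpha>0: "0 < \<alpha>" using par by simp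
  have xn: "\<delta> \<le> ?x n" "?x n < a" "a - ?x n \<le> 2*\<beta>^(n+l+1)/(1-\<beta>)"
    using seq_basic(1-3)[OF \<alpha>0 par(5,6) sm] by auto
  have xn1: "?x (Suc n) < a" using seq_basic(2)[OF \<alpha>0 par(5,6) sm] by auto
  have xs: "?x (Suc n) = ?y n + \<beta>^(n+l+1)" by (rule xs_Suc)
  have ys: "?y n = ?x n + \<alpha>^(n+l+1)" by (rule ys_eq)
  have \<beta>pos: "0 < \<beta>^(n+l+1)" using par by simp
  have \<alpha>pos: "0 < \<alpha>^(n+l+1)" using par by simp
  have yx: "?x n \<le> ?y n" using ys \<alpha>pos by simp
  have ya: "?y n < a" using xs xn1 \<beta>pos by simp
  have ma1: "m (1 - a) = 0" using ma ab by (simp add: eq_diff_eq[symmetric] add.commute)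
  have mb: "- (h^(n+1)) \<le> m r \<and> - (h^(n+1)) \<le> m (1 - r)" if "r \<in> {?y n..a}" for r
    using m_bound[OF par(3-7) sm abv ma(1) ma1 that] .
  define Wd where "Wd = \<delta>^(d-1)"
  have Wd0: "0 < Wd" unfolding Wd_def using par by simp
  have tailb: "2*(a - ?y n)*(L/(\<delta>^(d-1)*exp(2 * s * (-(h^(n+1)))))) \<le> 2*(2*\<beta>^(n+l+1)/(1-\<beta>))*(L/(\<delta>^(d-1)*exp(2 * s * (-(h^(n+1))))))"
  proof -
    have "a - ?y n \<le> 2*\<beta>^(n+l+1)/(1-\<beta>)" using xn(3) yx by linarith
    moreover have "0 \<le> L/(\<delta>^(d-1)*exp(2 * s * (-(h^(n+1)))))" using L0 par by simp
    ultimately show ?thesis by (intro mult_right_mono mult_left_mono) auto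
  qed
  have "(\<phi> a)^2 \<le> 2/(\<delta>^(d-1)*exp(2 * s * (\<nu>*h^n))*measure lborel {?y n..<?x (Suc n)}) + 2*(a - ?y n)*(L/(\<delta>^(d-1)*exp(2 * s * (-(h^(n+1))))))"
  proof (rule point_bound[OF H wphi wg L0 s0 par(1)])
    show "\<delta> \<le> ?y n" using xn(1) yx by simp
    show "?y n \<le> a" "a \<le> a" "a \<le> 1" "?y n < a" using ya ab by auto
    show "{?y n..<?x (Suc n)} \<subseteq> {?y n..a}" using xn1 by auto
    show "{?y n..<?x (Suc n)} \<in> sets lborel" by simp
    show "0 < measure lborel {?y n..<?x (Suc n)}" using xs \<beta>pos by simp
    show "\<forall>r\<in>{?y n..<?x (Suc n)}. \<nu> * h ^ n \<le> m r" using abv unfolding above_step_def by auto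
    show "\<forall>r\<in>{?y n..a}. - (h^(n+1)) \<le> m r" using mb by auto
  qed
  moreover have meq: "measure lborel {?y n..<?x (Suc n)} = \<beta>^(n+l+1)" using xs \<beta>pos by simp
  ultimately have Pa: "(\<phi> a)^2 \<le> 2/(\<delta>^(d-1)*exp(2 * s * (\<nu>*h^n))*\<beta>^(n+l+1)) + 2*(a - ?y n)*(L/(\<delta>^(d-1)*exp(2 * s * (-(h^(n+1))))))"
    by (simp only:)
  then show "(\<phi> a)^2 \<le> 2/(\<delta>^(d-1)*exp(2 * s * (\<nu>*h^n))*\<beta>^(n+l+1)) + 2*(2*\<beta>^(n+l+1)/(1-\<beta>))*(L/(\<delta>^(d-1)*exp(2 * s * (-(h^(n+1))))))"
    using tailb by linarith
  have "(\<phi> b)^2 \<le> 2/(\<delta>^(d-1)*exp(2 * s * (\<nu>*h^n))*measure lborel {1 - ?x (Suc n)<..1 - ?y n}) + 2*((1 - ?y n) - b)*(L/(\<delta>^(d-1)*exp(2 * s * (-(h^(n+1))))))"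
  proof (rule point_bound[OF H wphi wg L0 s0 par(1)])
    show "\<delta> \<le> b" using par ab by simp
    show "b \<le> b" "b \<le> 1 - ?y n" "1 - ?y n \<le> 1" "b < 1 - ?y n" using ya ab xn(1) yx par by auto
    show "{1 - ?x (Suc n)<..1 - ?y n} \<subseteq> {b..1 - ?y n}" using xn1 ab by auto
    show "{1 - ?x (Suc n)<..1 - ?y n} \<in> sets lborel" by simp
    show "0 < measure lborel {1 - ?x (Suc n)<..1 - ?y n}" using xs \<beta>pos by simp
    show "\<forall>r\<in>{1 - ?x (Suc n)<..1 - ?y n}. \<nu> * h ^ n \<le> m r"
    proof
      fix r assume r: "r \<in> {1 - ?x (Suc n)<..1 - ?y n}"
      then have "1 - r \<in> {?y n..<?x (Suc n)}" by auto
      then have "\<nu> * h ^ n \<le> m (1 - (1 - r))" using abv unfolding above_step_def by blast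
      then show "\<nu> * h ^ n \<le> m r" by simp
    qed
    show "\<forall>r\<in>{b..1 - ?y n}. - (h^(n+1)) \<le> m r"
    proof
      fix r assume r: "r \<in> {b..1 - ?y n}"
      then have "1 - r \<in> {?y n..a}" using ab by auto
      then have "- (h^(n+1)) \<le> m (1 - (1 - r))" using mb by blast
      then show "- (h^(n+1)) \<le> m r" by simp
    qed
  qed
  moreover have "measure lborel {1 - ?x (Suc n)<..1 - ?y n} = \<beta>^(n+l+1)" using xs \<beta>pos by simp
  moreover have "(1 - ?y n) - b = a - ?y n" using ab by simp
  ultimately have "(\<phi> b)^2 \<le> 2/(\<delta>^(d-1)*exp(2 * s * (\<nu>*h^n))*\<beta>^(n+l+1)) + 2*(a - ?y n)*(L/(\<delta>^(d-1)*exp(2 * s * (-(h^(n+1))))))"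
    by (simp only:)
  then show "(\<phi> b)^2 \<le> 2/(\<delta>^(d-1)*exp(2 * s * (\<nu>*h^n))*\<beta>^(n+l+1)) + 2*(2*\<beta>^(n+l+1)/(1-\<beta>))*(L/(\<delta>^(d-1)*exp(2 * s * (-(h^(n+1))))))"
    using tailb by linarith
qed


lemma core:
  fixes d :: nat and a b s L Bc \<eta> \<delta> h \<alpha> \<beta> \<nu> :: real and m c \<phi> g :: "real \<Rightarrow> real" and l n :: nat
  assumes ab: "0 < a" "a < b" "b < 1" "a + b = 1"
    and mc: "continuous_on {0..1} m" and cc: "continuous_on {0..1} c"
    and mab: "\<forall>r\<in>{a..b}. m r = 0" and cpos: "\<forall>r\<in>{0..1}. c r > 0"
    and cgt: "\<forall>r\<in>{0..a} \<union> {b..1}. c r > eig_D d c a b"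
    and L: "L = \<bar>eig_D d c a b\<bar> + 1"
    and Bc: "\<forall>r\<in>{a..b}. \<bar>c r - eig_D d c a b\<bar> \<le> Bc"
    and par: "0 < \<delta>" "\<delta> < a" "0 < h" "h < \<alpha>" "\<alpha> < \<beta>" "\<beta> < 1" "1 < \<nu>"
    and sm: "(\<lambda>i. \<alpha>^(Suc i + l) + \<beta>^(Suc i + l)) sums (a - \<delta>)"
    and abv: "above_step m \<delta> h \<alpha> \<beta> \<nu> l"
    and s0: "0 \<le> s" and \<eta>: "0 < \<eta>" "\<eta> \<le> 1"
    and Bn: "2/(\<delta>^(d-1)*exp(2 * s * (\<nu>*h^n))*\<beta>^(n+l+1)) + 2*(2*\<beta>^(n+l+1)/(1-\<beta>))*(L/(\<delta>^(d-1)*exp(2 * s * (-(h^(n+1)))))) \<le> \<eta>"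
    and H: "H1_on 0 1 \<phi> g"
    and nrm: "(LBINT r:{0..1}. r^(d-1) * exp (2 * s * m r) * (\<phi> r)^2) = 1"
  shows "eig_D d c a b - sqrt \<eta> * (2*(1+L)/(b-a) + 4/(b-a)^2 + 3*Bc) \<le> (LBINT r:{0..1}. r^(d-1) * exp (2 * s * m r) * ((g r)^2 + c r * (\<phi> r)^2))"
proof -
  define Lam where "Lam = eig_D d c a b"
  define w where "w r = r^(d-1) * exp (2 * s * m r)" for r
  define K where "K = 2*(1+L)/(b-a) + 4/(b-a)^2 + 3*Bc"
  define Q where "Q = (LBINT r:{0..1}. w r * ((g r)^2 + c r * (\<phi> r)^2))"
  have Bc0: "0 \<le> Bc" using Bc ab by force
  have L0: "0 < L" using L by simp
  have K0: "0 \<le> K" unfolding K_def using Bc0 L0 ab by (intro add_nonneg_nonneg) auto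
  have w0: "0 \<le> w r" if "0 \<le> r" for r unfolding w_def using that by simp
  have wc: "continuous_on {0..1} w" unfolding w_def using mc by (intro continuous_intros)
  have \<phi>c: "continuous_on {0..1} \<phi>" by (rule H1_cont[OF H])
  have ig2: "set_integrable lborel {0..1} (\<lambda>r. (g r)^2)" using H unfolding H1_on_def by auto
  have iwp: "set_integrable lborel {0..1} (\<lambda>r. w r * (\<phi> r)^2)"
    by (rule cont_int) (use wc \<phi>c in \<open>intro continuous_intros\<close>)
  have iwg: "set_integrable lborel {0..1} (\<lambda>r. w r * (g r)^2)" by (rule si_cont_mult[OF _ wc ig2]) auto
  have iwcp: "set_integrable lborel {0..1} (\<lambda>r. w r * (c r * (\<phi> r)^2))"
    by (rule cont_int) (use wc \<phi>c cc in \<open>intro continuous_intros\<close>)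
  have iwcl: "set_integrable lborel {0..1} (\<lambda>r. w r * ((c r - Lam) * (\<phi> r)^2))"
    by (rule cont_int) (use wc \<phi>c cc in \<open>intro continuous_intros\<close>)
  have nonneg: "0 \<le> (LBINT r:S. f r)" if "\<And>r. r \<in> S \<Longrightarrow> 0 \<le> f r" for f :: "real \<Rightarrow> real" and S
    unfolding set_lebesgue_integral_def by (rule integral_nonneg_AE, rule AE_I2) (use that in \<open>auto simp: indicator_def\<close>)
  have Qeq: "Q = (LBINT r:{0..1}. w r * (g r)^2) + (LBINT r:{0..1}. w r * (c r * (\<phi> r)^2))"
    unfolding Q_def using iwg iwcp by (simp add: distrib_left)
  have Iwcp0: "0 \<le> (LBINT r:{0..1}. w r * (c r * (\<phi> r)^2))"
  proof (rule nonneg)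
    fix r :: real assume r: "r \<in> {0..1}"
    then have "0 \<le> c r" using cpos by (auto intro: less_imp_le)
    then show "0 \<le> w r * (c r * (\<phi> r)^2)" using w0 r by (intro mult_nonneg_nonneg) auto
  qed
  have Iwg0: "0 \<le> (LBINT r:{0..1}. w r * (g r)^2)"
    by (rule nonneg) (use w0 in \<open>auto intro!: mult_nonneg_nonneg\<close>)
  have nrm': "(LBINT r:{0..1}. w r * (\<phi> r)^2) = 1" using nrm unfolding w_def .
  have goal: "Lam - sqrt \<eta> * K \<le> Q"
  proof (cases "Lam \<le> Q")
    case True
    have "0 \<le> sqrt \<eta> * K" using K0 \<eta> by simp
    then show ?thesis using True by linarith
  next
    case False
    then have QL: "Q < Lam" by simp
    have IwgL: "(LBINT r:{0..1}. w r * (g r)^2) \<le> L"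
      using Qeq Iwcp0 QL L unfolding Lam_def by linarith
    have wg': "set_integrable lborel {0..1} (\<lambda>r. r^(d-1)*exp(2 * s * m r)*(g r)^2)"
      "(LBINT r:{0..1}. r^(d-1)*exp(2 * s * m r)*(g r)^2) \<le> L" using iwg IwgL unfolding w_def by auto
    have wp': "set_integrable lborel {0..1} (\<lambda>r. r^(d-1)*exp(2 * s * m r)*(\<phi> r)^2)"
      using iwp unfolding w_def by auto
    have mab': "m a = 0" "m b = 0" using mab ab by auto
    note bb = boundary_bound[OF H wp' nrm wg' L0 s0 ab(2-4) par sm abv mab', of n]
    have ea: "\<bar>\<phi> a\<bar> \<le> sqrt \<eta>"
    proof -
      have "(\<phi> a)^2 \<le> \<eta>" using bb(1) Bn by linarith
      then have "sqrt ((\<phi> a)^2) \<le> sqrt \<eta>" by (rule real_sqrt_le_mono)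
      then show ?thesis by simp
    qed
    have eb: "\<bar>\<phi> b\<bar> \<le> sqrt \<eta>"
    proof -
      have "(\<phi> b)^2 \<le> \<eta>" using bb(2) Bn by linarith
      then have "sqrt ((\<phi> b)^2) \<le> sqrt \<eta>" by (rule real_sqrt_le_mono)
      then show ?thesis by simp
    qed
    have e1: "sqrt \<eta> \<le> 1" using \<eta> by simp
    have sub: "{a..b} \<subseteq> {0..1}" using ab by auto
    have cong: "(LBINT r:{a..b}. w r * f r) = (LBINT r:{a..b}. r^(d-1) * f r)" for f
      by (rule set_lebesgue_integral_cong) (use mab in \<open>auto simp: w_def\<close>)
    have A1: "(LBINT r:{a..b}. r^(d-1)*(g r)^2) \<le> L"
    proof -
      have "(LBINT r:{a..b}. w r * (g r)^2) \<le> (LBINT r:{0..1}. w r * (g r)^2)"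
        by (rule set_int_mono_sets[OF iwg]) (use sub w0 in auto)
      then show ?thesis using IwgL cong by simp
    qed
    have Aphi: "(LBINT r:{a..b}. r^(d-1)*(\<phi> r)^2) \<le> 1"
    proof -
      have "(LBINT r:{a..b}. w r * (\<phi> r)^2) \<le> (LBINT r:{0..1}. w r * (\<phi> r)^2)"
        by (rule set_int_mono_sets[OF iwp]) (use sub w0 in auto)
      then show ?thesis using nrm' cong by simp
    qed
    have cpos': "\<forall>r\<in>{a..b}. 0 < c r" using cpos sub by auto
    have dp: "- sqrt \<eta> * K \<le> (LBINT r:{a..b}. r^(d-1)*(g r)^2) + (LBINT r:{a..b}. r^(d-1)*((c r - Lam)*(\<phi> r)^2))"
      unfolding K_def Lam_def
      by (rule dirichlet_part[OF H ab(1,2) _ cc cpos' Bc A1 _ Aphi ea eb e1]) (use ab L0 in auto)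
    have d1: "(LBINT r:{a..b}. r^(d-1)*(g r)^2) \<le> (LBINT r:{0..1}. w r * (g r)^2)"
    proof -
      have "(LBINT r:{a..b}. w r * (g r)^2) \<le> (LBINT r:{0..1}. w r * (g r)^2)"
        by (rule set_int_mono_sets[OF iwg]) (use sub w0 in auto)
      then show ?thesis using cong by simp
    qed
    have d2: "(LBINT r:{a..b}. r^(d-1)*((c r - Lam)*(\<phi> r)^2)) \<le> (LBINT r:{0..1}. w r * ((c r - Lam) * (\<phi> r)^2))"
    proof -
      have "(LBINT r:{a..b}. w r * ((c r - Lam) * (\<phi> r)^2)) \<le> (LBINT r:{0..1}. w r * ((c r - Lam) * (\<phi> r)^2))"
      proof (rule set_int_mono_sets[OF iwcl])
        show "{a..b} \<in> sets lborel" "{a..b} \<subseteq> {0..1}" using sub by auto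
        show "\<forall>x\<in>{0..1} - {a..b}. 0 \<le> w x * ((c x - Lam) * (\<phi> x)^2)"
        proof
          fix x assume x: "x \<in> {0..1} - {a..b}"
          then have "x \<in> {0..a} \<union> {b..1}" by auto
          then have "Lam < c x" using cgt unfolding Lam_def by blast
          then show "0 \<le> w x * ((c x - Lam) * (\<phi> x)^2)" using w0 x by (intro mult_nonneg_nonneg) auto
        qed
      qed
      then show ?thesis using cong by simp
    qed
    have d3: "(LBINT r:{0..1}. w r * ((c r - Lam) * (\<phi> r)^2)) = (LBINT r:{0..1}. w r * (c r * (\<phi> r)^2)) - Lam"
    proof -
      have "(LBINT r:{0..1}. w r * ((c r - Lam) * (\<phi> r)^2)) = (LBINT r:{0..1}. w r * (c r * (\<phi> r)^2) - Lam * (w r * (\<phi> r)^2))"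
        by (rule set_lebesgue_integral_cong) (auto simp: algebra_simps)
      also have "\<dots> = (LBINT r:{0..1}. w r * (c r * (\<phi> r)^2)) - Lam * (LBINT r:{0..1}. w r * (\<phi> r)^2)"
        using iwcp iwp by simp
      finally show ?thesis using nrm' by simp
    qed
    show ?thesis using dp d1 d2 d3 Qeq by linarith
  qed
  then show ?thesis unfolding Lam_def K_def Q_def w_def .
qed


lemma Bn_eq1:
  fixes \<delta> \<beta> s \<nu> h :: real assumes "0 < \<delta>" "0 < \<beta>"
  shows "2/(\<delta>^(d-1)*exp(2 * s * (\<nu>*h^n))*\<beta>^(n+l+1)) = (2/(\<delta>^(d-1)*\<beta>^(l+1))) * (exp (-(2 * s * \<nu> * h^n)) / \<beta>^n)"
proof -
  have "\<beta>^(n+l+1) = \<beta>^n * \<beta>^(l+1)" by (simp add: power_add[symmetric])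
  moreover have "exp (-(2 * s * \<nu> * h^n)) = 1 / exp (2 * s * (\<nu>*h^n))" by (simp add: exp_minus field_simps)
  ultimately show ?thesis using assms by (simp add: field_simps)
qed

lemma Bn_eq2:
  fixes \<delta> \<beta> s L h :: real assumes "0 < \<delta>" "0 < \<beta>" "\<beta> < 1"
  shows "2*(2*\<beta>^(n+l+1)/(1-\<beta>))*(L/(\<delta>^(d-1)*exp(2 * s * (-(h^(n+1)))))) = (2*(2*\<beta>^(l+1)/(1-\<beta>))*L/\<delta>^(d-1)) * (\<beta>^n * exp (2 * s * h^(n+1)))"
proof -
  have "\<beta>^(n+l+1) = \<beta>^n * \<beta>^(l+1)" by (simp add: power_add[symmetric])
  moreover have "1 / exp (2 * s * (-(h^(n+1)))) = exp (2 * s * h^(n+1))" by (simp add: exp_minus divide_inverse)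
  ultimately show ?thesis using assms by (simp add: field_simps)
qed

lemma eig_s_nonempty:
  fixes m c :: "real \<Rightarrow> real" and s :: real and d :: nat
  assumes mc: "continuous_on {0..1} m" and s0: "0 \<le> s"
  shows "{(LBINT r:{0..1}. r^(d-1) * exp (2 * s * m r) * ((g r)^2 + c r * (\<phi> r)^2)) | \<phi> g.
       H1_on 0 1 \<phi> g \<and> (LBINT r:{0..1}. r^(d-1) * exp (2 * s * m r) * (\<phi> r)^2) = 1} \<noteq> {}"
proof -
  define w where "w r = r^(d-1) * exp (2 * s * m r)" for r
  have wc: "continuous_on {0..1} w" unfolding w_def using mc by (intro continuous_intros)
  obtain M where M: "\<forall>r\<in>{0..1}. norm (m r) \<le> M"
    using compact_imp_bounded[OF compact_continuous_image[OF mc compact_Icc]] unfolding bounded_iff by auto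
  define c0 where "c0 = (1/2::real)^(d-1) * exp (2 * s * (-M))"
  have c00: "0 < c0" unfolding c0_def by simp
  define Z where "Z = (LBINT r:{0..1}. w r)"
  have iw: "set_integrable lborel {0..1} w" by (rule cont_int[OF wc])
  have "(LBINT r:{1/2..1::real}. c0) \<le> (LBINT r:{1/2..1}. w r)"
  proof (rule set_integral_mono)
    show "set_integrable lborel {1/2..1::real} (\<lambda>r. c0)" by (rule cont_int) auto
    show "set_integrable lborel {1/2..1} w" using set_integrable_subset[OF iw] by auto
    fix r :: real assume r: "r \<in> {1/2..1}"
    then have "r \<in> {0..1}" by auto
    then have "\<bar>m r\<bar> \<le> M" using M by auto
    then have "- M \<le> m r" by linarith
    then show "c0 \<le> w r" unfolding c0_def w_def using w_lower[OF s0, of "1/2" r "-M" m d] r by auto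
  qed
  also have "\<dots> \<le> Z" unfolding Z_def
    by (rule set_int_mono_sets[OF iw]) (auto simp: w_def)
  finally have "c0 / 2 \<le> Z" by (simp add: set_integral_const)
  then have Z0: "0 < Z" using c00 by simp
  define t where "t = 1 / sqrt Z"
  have nc: "(LBINT r:{0..1}. r^(d-1) * exp (2 * s * m r) * t^2) = 1"
  proof -
    have "(LBINT r:{0..1}. r^(d-1) * exp (2 * s * m r) * t^2) = Z * t^2"
      unfolding Z_def w_def by simp
    also have "\<dots> = 1" unfolding t_def using Z0 by (simp add: power_divide)
    finally show ?thesis .
  qed
  have Hc: "H1_on 0 1 (\<lambda>_. t) (\<lambda>_. 0)"
    unfolding H1_on_def set_borel_measurable_def set_integrable_def by simp
  have "(LBINT r:{0..1}. r^(d-1) * exp (2 * s * m r) * ((0::real)^2 + c r * t^2)) \<in> {(LBINT r:{0..1}. r^(d-1) * exp (2 * s * m r) * ((g r)^2 + c r * (\<phi> r)^2)) | \<phi> g.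
       H1_on 0 1 \<phi> g \<and> (LBINT r:{0..1}. r^(d-1) * exp (2 * s * m r) * (\<phi> r)^2) = 1}"
    using Hc nc by (intro CollectI exI[where x="\<lambda>_. t"] exI[where x="\<lambda>_. 0::real"]) auto
  then show ?thesis by blast
qed

theorem lemma3p5:
  fixes d :: nat and a b :: real and m m' c :: "real \<Rightarrow> real"
  assumes "d \<ge> 1"
    and "0 < a" "a < b" "b < 1" "a + b = 1"
    and "\<forall>x\<in>{0..1}. (m has_real_derivative m' x) (at x within {0..1})"
    and "continuous_on {0..1} m'"
    and "\<not> (\<exists>k. \<forall>x\<in>{0..1}. m x = k)"
    and "continuous_on {0..1} c"
    and "\<forall>r\<in>{0..1}. m r = m (1 - r)" and "\<forall>r\<in>{a..b}. m r = 0"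
    and "\<forall>r\<in>{0..1}. c r > 0"
    and "\<forall>r\<in>{0..a} \<union> {b..1}. c r > eig_D d c a b"
    and "in_SD a m m'"
  shows "Liminf at_top (\<lambda>s. ereal (eig_s d m c s)) \<ge> ereal (eig_D d c a b)"
proof -
  note ab = assms(2-5)
  obtain \<delta> h \<alpha> \<beta> \<nu> l where par: "0 < \<delta>" "\<delta> < a" "0 < h" "h < \<alpha>" "\<alpha> < \<beta>" "\<beta> < 1" "1 < \<nu>"
    and sm: "(\<lambda>i. \<alpha>^(Suc i + l) + \<beta>^(Suc i + l)) sums (a - \<delta>)"
    and abv: "above_step m \<delta> h \<alpha> \<beta> \<nu> l"
    using assms(14) unfolding in_SD_def by blast
  define Lam where "Lam = eig_D d c a b"
  have mc: "continuous_on {0..1} m"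
    unfolding continuous_on_eq_continuous_within
    using assms(6) by (auto intro: DERIV_continuous)
  have ccab: "continuous_on {a..b} (\<lambda>r. c r - Lam)"
    using continuous_on_subset[OF assms(9)] ab by (intro continuous_intros) auto
  obtain Bc where Bc: "\<forall>r\<in>{a..b}. norm (c r - Lam) \<le> Bc"
    using compact_imp_bounded[OF compact_continuous_image[OF ccab compact_Icc]] unfolding bounded_iff by auto
  have Bc': "\<forall>r\<in>{a..b}. \<bar>c r - eig_D d c a b\<bar> \<le> Bc" using Bc unfolding Lam_def by auto
  have Bc0: "0 \<le> Bc" using Bc ab by force
  define L where "L = \<bar>Lam\<bar> + 1"
  have L0: "0 < L" unfolding L_def by simp
  define K where "K = 2*(1+L)/(b-a) + 4/(b-a)^2 + 3*Bc"
  have K0: "0 \<le> K" unfolding K_def using Bc0 L0 ab by (intro add_nonneg_nonneg) auto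
  define C1 where "C1 = 2/(\<delta>^(d-1)*\<beta>^(l+1))"
  define C2 where "C2 = 2*(2*\<beta>^(l+1)/(1-\<beta>))*L/\<delta>^(d-1)"
  have C10: "0 < C1" unfolding C1_def using par by simp
  have C20: "0 < C2" unfolding C2_def using par L0 by simp
  show ?thesis unfolding le_Liminf_iff
  proof (intro allI impI)
    fix y :: ereal assume y: "y < ereal (eig_D d c a b)"
    show "eventually (\<lambda>s. y < ereal (eig_s d m c s)) at_top"
    proof (cases y)
      case MInf then show ?thesis by simp
    next
      case PInf then show ?thesis using y by simp
    next
      case (real y0)
      define \<epsilon> where "\<epsilon> = Lam - y0"
      have \<epsilon>0: "0 < \<epsilon>" unfolding \<epsilon>_def Lam_def using y real by simp
      define \<eta> where "\<eta> = min 1 ((\<epsilon>/(2*(K+1)))^2)"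
      have \<eta>0: "0 < \<eta>" unfolding \<eta>_def using \<epsilon>0 K0 by simp
      have \<eta>1: "\<eta> \<le> 1" unfolding \<eta>_def by simp
      have sq: "sqrt \<eta> * K \<le> \<epsilon>/2"
      proof -
        have "sqrt \<eta> \<le> sqrt ((\<epsilon>/(2*(K+1)))^2)" unfolding \<eta>_def by (intro real_sqrt_le_mono) simp
        also have "\<dots> = \<epsilon>/(2*(K+1))" using \<epsilon>0 K0 by simp
        finally have "sqrt \<eta> \<le> \<epsilon>/(2*(K+1))" .
        then have "sqrt \<eta> * K \<le> \<epsilon>/(2*(K+1)) * K" using K0 by (rule mult_right_mono)
        also have "\<dots> \<le> \<epsilon>/(2*(K+1)) * (K+1)" using \<epsilon>0 K0 by (intro mult_left_mono) auto
        also have "\<dots> = \<epsilon>/2"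
        proof -
          have "K + 1 \<noteq> 0" using K0 by simp
          then show ?thesis by (simp add: divide_simps)
        qed
        finally show ?thesis .
      qed
      have hb: "h < \<beta>" using par by simp
      have ev: "eventually (\<lambda>s. \<exists>n::nat. (C1 + C2) * (exp (-(2 * s * \<nu> * h^n)) / \<beta>^n + \<beta>^n * exp (2 * s * h^(n+1))) \<le> \<eta>) at_top"
        using C10 C20 by (intro asym[OF par(3) hb par(6) par(7) _ \<eta>0]) simp
      have ev0: "eventually (\<lambda>s::real. 0 \<le> s) at_top" by (rule eventually_ge_at_top)
      show ?thesis using ev ev0
      proof eventually_elim
        case (elim s)
        then obtain n :: nat where n: "(C1 + C2) * (exp (-(2 * s * \<nu> * h^n)) / \<beta>^n + \<beta>^n * exp (2 * s * h^(n+1))) \<le> \<eta>"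
          by blast
        have s0: "0 \<le> s" using elim by simp
        define t1 where "t1 = exp (-(2 * s * \<nu> * h^n)) / \<beta>^n"
        define t2 where "t2 = \<beta>^n * exp (2 * s * h^(n+1))"
        have t10: "0 \<le> t1" unfolding t1_def using par by simp
        have t20: "0 \<le> t2" unfolding t2_def using par by simp
        have Bn: "2/(\<delta>^(d-1)*exp(2 * s * (\<nu>*h^n))*\<beta>^(n+l+1)) + 2*(2*\<beta>^(n+l+1)/(1-\<beta>))*(L/(\<delta>^(d-1)*exp(2 * s * (-(h^(n+1)))))) \<le> \<eta>"
        proof -
          have "2/(\<delta>^(d-1)*exp(2 * s * (\<nu>*h^n))*\<beta>^(n+l+1)) + 2*(2*\<beta>^(n+l+1)/(1-\<beta>))*(L/(\<delta>^(d-1)*exp(2 * s * (-(h^(n+1)))))) = C1 * t1 + C2 * t2"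
            unfolding C1_def C2_def t1_def t2_def using par
            by (simp only: Bn_eq1[of \<delta> \<beta>] Bn_eq2[of \<delta> \<beta>])
          also have "\<dots> \<le> (C1 + C2) * (t1 + t2)" using C10 C20 t10 t20 by (simp add: algebra_simps)
          also have "\<dots> \<le> \<eta>" using n unfolding t1_def t2_def .
          finally show ?thesis .
        qed
        have low: "Lam - sqrt \<eta> * K \<le> eig_s d m c s"
          unfolding eig_s_def
        proof (rule cInf_greatest)
          show "{(LBINT r:{0..1}. r^(d-1) * exp (2 * s * m r) * ((g r)^2 + c r * (\<phi> r)^2)) | \<phi> g.
             H1_on 0 1 \<phi> g \<and> (LBINT r:{0..1}. r^(d-1) * exp (2 * s * m r) * (\<phi> r)^2) = 1} \<noteq> {}"
            by (rule eig_s_nonempty[OF mc s0])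
          fix x assume "x \<in> {(LBINT r:{0..1}. r^(d-1) * exp (2 * s * m r) * ((g r)^2 + c r * (\<phi> r)^2)) | \<phi> g.
             H1_on 0 1 \<phi> g \<and> (LBINT r:{0..1}. r^(d-1) * exp (2 * s * m r) * (\<phi> r)^2) = 1}"
          then obtain \<phi> g where x: "x = (LBINT r:{0..1}. r^(d-1) * exp (2 * s * m r) * ((g r)^2 + c r * (\<phi> r)^2))"
            and H: "H1_on 0 1 \<phi> g" and nrm: "(LBINT r:{0..1}. r^(d-1) * exp (2 * s * m r) * (\<phi> r)^2) = 1"
            by blast
          show "Lam - sqrt \<eta> * K \<le> x"
            unfolding x Lam_def K_def
            by (rule core[OF ab mc assms(9) assms(11) assms(12) assms(13) _ Bc' par sm abv s0 \<eta>0 \<eta>1 Bn H nrm])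
              (simp add: L_def Lam_def)
        qed
        have "sqrt \<eta> * K < \<epsilon>" using sq \<epsilon>0 by linarith
        then have "y0 < Lam - sqrt \<eta> * K" unfolding \<epsilon>_def by linarith
        then show ?case using low real by simp
      qed
    qed
  qed
qed


end
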